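(* \[\sum_{d=0}^{\min\{m,n\}}\{SF_d\}_{\lambda_1\le n+m-2d}+\sum_{d=0}^{\min\{m,n\}-1}\{SF_d\}_{\lambda_1\le n+m-2d-1}=\sum_{r=0}^{\min\{m,n\}}SF_r .\]
   Context: Fix positive integers $n,m$. $\Lambda$ is the ring of symmetric functions with Schur functions $s_\lambda$ and complete homogeneous functions $h_k$. For $0\le d\le\min\{m,n\}$, $SF_d:=\sum_{\mu\vdash d}(s_\mu h_{n-d})\otimes(s_\mu h_{m-d})\in\Lambda\otimes\Lambda$. For $F=\sum_{\lambda,\mu}c_{\lambda,\mu}s_\lambda\otimes s_\mu$ and an integer $L$, $\{F\}_{\lambda_1\le L}:=\sum_{\lambda_1\le L,\ \mu_1\le L}c_{\lambda,\mu}s_\lambda\otimes s_\mu$. *)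

theory Defs
  imports "HOL-Library.Poly_Mapping" "HOL-Library.Function_Algebras"
begin

text \<open>Symmetric functions are modelled by their images in the ring of polynomials
in the N variables x_0, ..., x_(N-1) (with integer coefficients), for N at least the
relevant degree, where the restriction map is injective and sends s_lambda to the
Schur polynomial (zero if length lambda > N).\<close>

type_synonym poly = "(nat \<Rightarrow>\<^sub>0 nat) \<Rightarrow>\<^sub>0 int"

text \<open>Elements of the tensor product: coefficient functions on pairs of monomials.\<close>
type_synonym tens = "(nat \<Rightarrow>\<^sub>0 nat) \<times> (nat \<Rightarrow>\<^sub>0 nat) \<Rightarrow> int"

definition is_partition :: "nat list \<Rightarrow> bool" where
  "is_partition la \<longleftrightarrow> sorted_wrt (\<ge>) la \<and> (\<forall>x\<in>set la. 0 < x)"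

definition partitions_of :: "nat \<Rightarrow> nat list set" where
  "partitions_of d = {la. is_partition la \<and> sum_list la = d}"

definition part_first :: "nat list \<Rightarrow> nat" where
  "part_first la = (if la = [] then 0 else hd la)"

definition cells :: "nat list \<Rightarrow> (nat \<times> nat) set" where
  "cells la = {(i, j). i < length la \<and> j < la ! i}"

definition ssyt :: "nat \<Rightarrow> nat list \<Rightarrow> (nat \<times> nat \<Rightarrow> nat) set" where
  "ssyt N la = {T. (\<forall>c\<in>cells la. T c < N) \<and> (\<forall>c. c \<notin> cells la \<longrightarrow> T c = 0)
     \<and> (\<forall>i j. (i, Suc j) \<in> cells la \<longrightarrow> T (i, j) \<le> T (i, Suc j))
     \<and> (\<forall>i j. (Suc i, j) \<in> cells la \<longrightarrow> T (i, j) < T (Suc i, j))}"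

definition tab_monomial :: "nat list \<Rightarrow> (nat \<times> nat \<Rightarrow> nat) \<Rightarrow> (nat \<Rightarrow>\<^sub>0 nat)" where
  "tab_monomial la T = (\<Sum>c\<in>cells la. Poly_Mapping.single (T c) 1)"

definition schur :: "nat \<Rightarrow> nat list \<Rightarrow> poly" where
  "schur N la = (\<Sum>T\<in>ssyt N la. Poly_Mapping.single (tab_monomial la T) 1)"

definition hcomp :: "nat \<Rightarrow> nat \<Rightarrow> poly" where
  "hcomp N k = (\<Sum>a\<in>{a :: nat \<Rightarrow>\<^sub>0 nat. Poly_Mapping.keys a \<subseteq> {..<N} \<and> (\<Sum>i\<in>Poly_Mapping.keys a. Poly_Mapping.lookup a i) = k}.
                   Poly_Mapping.single a 1)"

definition tensor :: "poly \<Rightarrow> poly \<Rightarrow> tens" where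
  "tensor f g = (\<lambda>(a, b). Poly_Mapping.lookup f a * Poly_Mapping.lookup g b)"

definition SF :: "nat \<Rightarrow> nat \<Rightarrow> nat \<Rightarrow> nat \<Rightarrow> tens" where
  "SF N n m d = (\<Sum>mu\<in>partitions_of d.
       tensor (schur N mu * hcomp N (n - d)) (schur N mu * hcomp N (m - d)))"

definition schur_basis :: "nat \<Rightarrow> nat list set" where
  "schur_basis N = {la. is_partition la \<and> length la \<le> N}"

definition schur_term :: "nat \<Rightarrow> (nat list \<times> nat list \<Rightarrow> int) \<Rightarrow> nat list \<times> nat list \<Rightarrow> tens" where
  "schur_term N c p = (\<lambda>x. c p * tensor (schur N (fst p)) (schur N (snd p)) x)"

definition schur_expansion :: "nat \<Rightarrow> tens \<Rightarrow> (nat list \<times> nat list \<Rightarrow> int) \<Rightarrow> bool" where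
  "schur_expansion N F c \<longleftrightarrow> finite {p. c p \<noteq> 0}
     \<and> (\<forall>p. c p \<noteq> 0 \<longrightarrow> fst p \<in> schur_basis N \<and> snd p \<in> schur_basis N)
     \<and> F = (\<Sum>p\<in>{p. c p \<noteq> 0}. schur_term N c p)"

definition truncate :: "nat \<Rightarrow> nat \<Rightarrow> tens \<Rightarrow> tens" where
  "truncate N L F = (let c = (THE c. schur_expansion N F c) in
     (\<Sum>p\<in>{p. c p \<noteq> 0 \<and> part_first (fst p) \<le> L \<and> part_first (snd p) \<le> L}. schur_term N c p))"

end

theory Submission
  imports Defs "HOL-Library.FuncSet"
begin


definition hsf :: "(nat \<Rightarrow> nat) \<Rightarrow> (nat \<Rightarrow> nat) \<Rightarrow> bool" where
  "hsf la mu \<longleftrightarrow> (\<forall>i. la (Suc i) \<le> mu i \<and> mu i \<le> la i)"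

definition bnd :: "nat \<Rightarrow> (nat \<Rightarrow> nat) \<Rightarrow> bool" where
  "bnd L f \<longleftrightarrow> (\<forall>i\<ge>L. f i = 0)"

definition sz :: "nat \<Rightarrow> (nat \<Rightarrow> nat) \<Rightarrow> nat" where
  "sz L f = sum f {..<L}"

definition box :: "(nat \<Rightarrow> nat) \<Rightarrow> (nat \<Rightarrow> nat) \<Rightarrow> (nat \<Rightarrow> nat) set" where
  "box A B = {k. hsf A k \<and> hsf B k}"

lemma finite_bounded_funs:
  "finite {f :: nat \<Rightarrow> nat. (\<forall>i. f i \<le> C) \<and> bnd L f}"
proof -
  let ?S = "{xs :: nat list. set xs \<subseteq> {..C} \<and> length xs = L}"
  have "finite ?S" by (rule finite_lists_length_eq) auto
  moreover have "inj_on (\<lambda>f. map f [0..<L]) {f :: nat \<Rightarrow> nat. (\<forall>i. f i \<le> C) \<and> bnd L f}"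
  proof (rule inj_onI)
    fix f g assume f: "f \<in> {f :: nat \<Rightarrow> nat. (\<forall>i. f i \<le> C) \<and> bnd L f}"
      and g: "g \<in> {f :: nat \<Rightarrow> nat. (\<forall>i. f i \<le> C) \<and> bnd L f}"
      and e: "map f [0..<L] = map g [0..<L]"
    show "f = g"
    proof
      fix i show "f i = g i"
      proof (cases "i < L")
        case True then show ?thesis using e by (metis map_eq_conv atLeastLessThan_iff set_upt zero_le)
      next
        case False then show ?thesis using f g by (auto simp: bnd_def)
      qed
    qed
  qed
  moreover have "(\<lambda>f. map f [0..<L]) ` {f :: nat \<Rightarrow> nat. (\<forall>i. f i \<le> C) \<and> bnd L f} \<subseteq> ?S"
    by auto
  ultimately show ?thesis by (meson finite_imageD finite_subset)
qed

lemma le_sz: "i < L \<Longrightarrow> f i \<le> sz L f"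
  unfolding sz_def by (rule member_le_sum) auto

lemma bnd_le: "bnd L A \<Longrightarrow> \<forall>i. k i \<le> A i \<Longrightarrow> bnd L k"
  unfolding bnd_def by (metis le_zero_eq)

lemma finite_below:
  assumes "bnd L A"
  shows "finite {k. \<forall>i. k i \<le> A i}"
proof -
  have "{k. \<forall>i. k i \<le> A i} \<subseteq> {f. (\<forall>i. f i \<le> sz L A) \<and> bnd L f}"
  proof safe
    fix k i assume k: "\<forall>i. k i \<le> A i"
    show "k i \<le> sz L A"
    proof (cases "i < L")
      case True then show ?thesis using k le_sz order_trans by blast
    next
      case False then show ?thesis using k assms by (auto simp: bnd_def) (metis le_zero_eq not_le zero_le)
    qed
  next
    fix k assume "\<forall>i. k i \<le> A i" then show "bnd L k" using bnd_le assms by blast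
  qed
  then show ?thesis using finite_bounded_funs finite_subset by blast
qed

lemma box_le: "k \<in> box A B \<Longrightarrow> k i \<le> A i \<and> k i \<le> B i"
  by (auto simp: box_def hsf_def)

lemma finite_box: "bnd L A \<Longrightarrow> finite (box A B)"
  by (rule finite_subset[OF _ finite_below[of L A]]) (auto dest: box_le)

definition lo :: "(nat \<Rightarrow> nat) \<Rightarrow> (nat \<Rightarrow> nat) \<Rightarrow> nat \<Rightarrow> nat" where
  "lo A B i = max (A (Suc i)) (B (Suc i))"
definition hi :: "(nat \<Rightarrow> nat) \<Rightarrow> (nat \<Rightarrow> nat) \<Rightarrow> nat \<Rightarrow> nat" where
  "hi A B i = min (A i) (B i)"

lemma box_iff: "k \<in> box A B \<longleftrightarrow> (\<forall>i. lo A B i \<le> k i \<and> k i \<le> hi A B i)"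
  by (auto simp: box_def hsf_def lo_def hi_def)

lemma sum_lohi_aux:
  "(\<Sum>i<L. lo A B i + hi A B i) + max (A 0) (B 0) = (\<Sum>i<L. A i + B i) + max (A L) (B L)"
  by (induction L) (auto simp: lo_def hi_def)

lemma sum_lohi:
  assumes "bnd L A" "bnd L B"
  shows "(\<Sum>i<L. lo A B i + hi A B i) = sz L A + sz L B - max (A 0) (B 0)"
  using sum_lohi_aux[where L=L and A=A and B=B] assms by (simp add: bnd_def sz_def sum.distrib)

definition iota :: "(nat \<Rightarrow> nat) \<Rightarrow> (nat \<Rightarrow> nat) \<Rightarrow> (nat \<Rightarrow> nat) \<Rightarrow> (nat \<Rightarrow> nat)" where
  "iota A B k = (\<lambda>i. lo A B i + hi A B i - k i)"

lemma iota_box: "k \<in> box A B \<Longrightarrow> iota A B k \<in> box A B"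
  unfolding box_iff iota_def
proof (intro allI)
  fix i assume "\<forall>i. lo A B i \<le> k i \<and> k i \<le> hi A B i"
  then have "lo A B i \<le> k i" "k i \<le> hi A B i" by auto
  then show "lo A B i \<le> lo A B i + hi A B i - k i \<and> lo A B i + hi A B i - k i \<le> hi A B i" by arith
qed

lemma iota_iota: "k \<in> box A B \<Longrightarrow> iota A B (iota A B k) = k"
proof
  fix i assume k: "k \<in> box A B"
  then have "lo A B i \<le> k i" "k i \<le> hi A B i" by (auto simp: box_iff)
  then show "iota A B (iota A B k) i = k i" by (simp add: iota_def)
qed

lemma sz_iota:
  assumes "k \<in> box A B" "bnd L A" "bnd L B"
  shows "sz L (iota A B k) = sz L A + sz L B - max (A 0) (B 0) - sz L k"
proof -
  have le: "\<And>i. i \<in> {..<L} \<Longrightarrow> k i \<le> lo A B i + hi A B i" using assms(1) by (auto simp: box_iff) (meson le_trans trans_le_add2)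
  have "sz L (iota A B k) = (\<Sum>i<L. lo A B i + hi A B i) - sz L k"
    unfolding sz_def iota_def by (rule sum_subtractf_nat[OF le])
  then show ?thesis using sum_lohi[OF assms(2,3)] by simp
qed

lemma sz_box_le:
  assumes "k \<in> box A B" "bnd L A" "bnd L B"
  shows "sz L k \<le> sz L A + sz L B - max (A 0) (B 0)"
  using sz_iota[OF assms] sz_iota[OF iota_box[OF assms(1)] assms(2,3)] iota_iota[OF assms(1)]
  by (metis diff_le_self)

lemma sz_box_le2:
  assumes "k \<in> box A B"
  shows "sz L k \<le> sz L A" "sz L k \<le> sz L B"
  using box_le[OF assms] unfolding sz_def by (auto intro: sum_mono)

lemma box_card_sym:
  assumes "bnd L A" "bnd L B"
  shows "card {k\<in>box A B. P (sz L k)} = card {k\<in>box A B. P (sz L A + sz L B - max (A 0) (B 0) - sz L k)}"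
proof -
  let ?S = "sz L A + sz L B - max (A 0) (B 0)"
  let ?X = "{k\<in>box A B. P (sz L k)}" and ?Y = "{k\<in>box A B. P (?S - sz L k)}"
  have inj: "inj_on (iota A B) ?Y" by (rule inj_on_inverseI[where g="iota A B"]) (auto simp: iota_iota)
  have "iota A B ` ?Y = ?X"
  proof
    show "iota A B ` ?Y \<subseteq> ?X" using sz_iota assms iota_box by auto
  next
    show "?X \<subseteq> iota A B ` ?Y"
    proof
      fix k assume k: "k \<in> ?X"
      have "?S - (?S - sz L k) = sz L k" using sz_box_le[of k A B L] k assms by auto
      then have "iota A B k \<in> ?Y"
        using k sz_iota[of k A B L] assms iota_box sz_box_le[of k A B L] by auto
      then show "k \<in> iota A B ` ?Y" using iota_iota k by (metis (no_types, lifting) image_eqI mem_Collect_eq)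
    qed
  qed
  then show ?thesis using card_image[OF inj] by simp
qed


definition cellsf :: "(nat \<Rightarrow> nat) \<Rightarrow> (nat \<times> nat) set" where
  "cellsf f = {(i, j). j < f i}"

definition ssytf :: "nat \<Rightarrow> (nat \<Rightarrow> nat) \<Rightarrow> (nat \<times> nat \<Rightarrow> nat) set" where
  "ssytf N la = {T. (\<forall>c\<in>cellsf la. T c < N) \<and> (\<forall>c. c \<notin> cellsf la \<longrightarrow> T c = 0)
     \<and> (\<forall>i j. (i, Suc j) \<in> cellsf la \<longrightarrow> T (i, j) \<le> T (i, Suc j))
     \<and> (\<forall>i j. (Suc i, j) \<in> cellsf la \<longrightarrow> T (i, j) < T (Suc i, j))}"

definition cnt :: "(nat \<Rightarrow> nat) \<Rightarrow> (nat \<times> nat \<Rightarrow> nat) \<Rightarrow> nat \<Rightarrow> nat" where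
  "cnt la T v = card {c\<in>cellsf la. T c = v}"

definition Kf :: "nat \<Rightarrow> (nat \<Rightarrow> nat) \<Rightarrow> (nat \<Rightarrow> nat) \<Rightarrow> nat" where
  "Kf N la a = card {T\<in>ssytf N la. \<forall>v<N. cnt la T v = a v}"

definition pfun :: "nat \<Rightarrow> (nat \<Rightarrow> nat) \<Rightarrow> bool" where
  "pfun L f \<longleftrightarrow> bnd L f \<and> (\<forall>i. f (Suc i) \<le> f i)"

lemma cellsf_Sigma: "bnd L f \<Longrightarrow> cellsf f = Sigma {..<L} (\<lambda>i. {..<f i})"
proof safe
  fix i j assume b: "bnd L f" and "(i, j) \<in> cellsf f"
  then have "j < f i" by (simp add: cellsf_def)
  then show "i < L" using b unfolding bnd_def by (metis not_less0 not_le)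
qed (auto simp: cellsf_def)

lemma finite_cellsf: "bnd L f \<Longrightarrow> finite (cellsf f)"
  by (simp add: cellsf_Sigma)

lemma card_cellsf: "bnd L f \<Longrightarrow> card (cellsf f) = sz L f"
  by (simp add: cellsf_Sigma card_SigmaI sz_def)

lemma cellsf_mono: "\<forall>i. k i \<le> f i \<Longrightarrow> cellsf k \<subseteq> cellsf f"
  by (auto simp: cellsf_def) (meson less_le_trans)

lemma cellsf_inj: "cellsf k = cellsf f \<Longrightarrow> k = f"
proof
  fix i assume e: "cellsf k = cellsf f"
  have "\<forall>j. j < k i \<longleftrightarrow> j < f i" using e by (auto simp: cellsf_def set_eq_iff)
  then show "k i = f i" by (meson linorder_neqE_nat less_irrefl)
qed

lemma finite_ssytf:
  assumes "bnd L la" shows "finite (ssytf N la)"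
proof -
  let ?C = "cellsf la"
  have fin: "finite (Pi\<^sub>E ?C (\<lambda>_. {..<N}))" using finite_cellsf[OF assms] by (simp add: finite_PiE)
  have inj: "inj_on (\<lambda>T. restrict T ?C) (ssytf N la)"
  proof (rule inj_onI)
    fix S T assume S: "S \<in> ssytf N la" and T: "T \<in> ssytf N la" and e: "restrict S ?C = restrict T ?C"
    show "S = T"
    proof
      fix c show "S c = T c"
      proof (cases "c \<in> ?C")
        case True then show ?thesis using e by (metis restrict_apply')
      next
        case False
        have "S c = 0" "T c = 0" using S T False unfolding ssytf_def by blast+
        then show ?thesis by simp
      qed
    qed
  qed
  have "(\<lambda>T. restrict T ?C) ` ssytf N la \<subseteq> Pi\<^sub>E ?C (\<lambda>_. {..<N})"
    by (auto simp: ssytf_def)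
  then show ?thesis using inj fin by (meson finite_imageD finite_subset)
qed

lemma ssytf_out: "T \<in> ssytf N la \<Longrightarrow> c \<notin> cellsf la \<Longrightarrow> T c = 0"
  unfolding ssytf_def by blast

lemma row_mono:
  assumes "T \<in> ssytf N la" "(i, j) \<in> cellsf la" "j' \<le> j"
  shows "T (i, j') \<le> T (i, j)"
  using assms(3,2)
proof (induction j rule: dec_induct)
  case base then show ?case by simp
next
  case (step j)
  have "(i, j) \<in> cellsf la" using step.prems by (auto simp: cellsf_def)
  then have "T (i, j') \<le> T (i, j)" using step.IH by simp
  also have "\<dots> \<le> T (i, Suc j)" using assms(1) step.prems by (auto simp: ssytf_def)
  finally show ?case .
qed

lemma col_ge:
  assumes "T \<in> ssytf N la" "\<forall>i. la (Suc i) \<le> la i" "(i, j) \<in> cellsf la"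
  shows "i \<le> T (i, j)"
  using assms(3)
proof (induction i)
  case 0 then show ?case by simp
next
  case (Suc i)
  have "(i, j) \<in> cellsf la" using Suc.prems assms(2) by (auto simp: cellsf_def) (meson less_le_trans)
  then have "i \<le> T (i, j)" using Suc.IH by simp
  also have "\<dots> < T (Suc i, j)" using assms(1) Suc.prems by (auto simp: ssytf_def)
  finally show ?case by simp
qed

lemma Kf_long:
  assumes "pfun L la" "0 < la N"
  shows "Kf N la a = 0"
proof -
  have "ssytf N la = {}"
  proof (rule ccontr)
    assume "ssytf N la \<noteq> {}"
    then obtain T where T: "T \<in> ssytf N la" by blast
    have c: "(N, 0) \<in> cellsf la" using assms(2) by (simp add: cellsf_def)
    then have "N \<le> T (N, 0)" using col_ge[OF T] assms(1) by (auto simp: pfun_def)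
    moreover have "T (N, 0) < N" using T c by (auto simp: ssytf_def)
    ultimately show False by simp
  qed
  then show ?thesis by (simp add: Kf_def)
qed

lemma Kf_cong: "\<forall>v<N. a v = b v \<Longrightarrow> Kf N la a = Kf N la b"
  unfolding Kf_def by metis

lemma Kf_0: "Kf 0 la a = (if (\<forall>i. la i = 0) then 1 else 0)"
proof (cases "\<forall>i. la i = 0")
  case True
  then have "cellsf la = {}" by (simp add: cellsf_def)
  then have "ssytf 0 la = {(\<lambda>_. 0)}" by (auto simp: ssytf_def)
  then show ?thesis using True by (simp add: Kf_def)
next
  case False
  then obtain i where "la i \<noteq> 0" by blast
  then have "(i, 0) \<in> cellsf la" by (simp add: cellsf_def)
  then have "ssytf 0 la = {}" by (auto simp: ssytf_def)
  then show ?thesis using False by (simp add: Kf_def)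
qed


definition extT :: "(nat \<Rightarrow> nat) \<Rightarrow> (nat \<Rightarrow> nat) \<Rightarrow> nat \<Rightarrow> (nat \<times> nat \<Rightarrow> nat) \<Rightarrow> (nat \<times> nat \<Rightarrow> nat)" where
  "extT la ka N T' c = (if c \<in> cellsf ka then T' c else if c \<in> cellsf la then N else 0)"

definition HSd :: "nat \<Rightarrow> (nat \<Rightarrow> nat) \<Rightarrow> nat \<Rightarrow> (nat \<Rightarrow> nat) set" where
  "HSd L la e = {ka. hsf la ka \<and> sz L ka + e = sz L la}"

lemma downclosed_eq:
  assumes "finite S" "\<forall>j\<in>S. \<forall>j'\<le>j. j' \<in> S"
  shows "S = {..<card S}"
proof (cases "S = {}")
  case True then show ?thesis by simp
next
  case False
  let ?M = "Max S"
  have "?M \<in> S" using Max_in[OF assms(1) False] .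
  have "S = {..?M}"
  proof
    show "S \<subseteq> {..?M}" using Max_ge[OF assms(1)] by auto
    show "{..?M} \<subseteq> S" using assms(2) \<open>?M \<in> S\<close> by auto
  qed
  then show ?thesis by (metis card_atMost lessThan_Suc_atMost)
qed

lemma hsf_le: "hsf la ka \<Longrightarrow> ka i \<le> la i"
  by (simp add: hsf_def)

lemma hsf_pfun: "hsf la ka \<Longrightarrow> bnd L la \<Longrightarrow> pfun L ka"
  unfolding pfun_def hsf_def by (meson bnd_le le_trans)

lemma finite_HSd: "bnd L la \<Longrightarrow> finite (HSd L la e)"
  by (rule finite_subset[OF _ finite_below[of L la]]) (auto simp: HSd_def hsf_def)

lemma card_cells_diff:
  assumes "bnd L la" "\<forall>i. ka i \<le> la i"
  shows "card (cellsf la - cellsf ka) = sz L la - sz L ka"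
proof -
  have b: "bnd L ka" using bnd_le assms by blast
  have "card (cellsf la - cellsf ka) = card (cellsf la) - card (cellsf ka)"
    using card_Diff_subset[OF finite_cellsf[OF b] cellsf_mono[OF assms(2)]] .
  then show ?thesis using card_cellsf assms b by simp
qed

context
  fixes L N :: nat and la a :: "nat \<Rightarrow> nat"
  assumes pla: "pfun L la"
begin

lemma ext_in:
  assumes ka: "ka \<in> HSd L la (a N)" and T: "T \<in> ssytf N ka" "\<forall>v<N. cnt ka T v = a v"
  shows "extT la ka N T \<in> ssytf (Suc N) la \<and> (\<forall>v<Suc N. cnt la (extT la ka N T) v = a v)"
proof -
  let ?E = "extT la ka N T"
  have hs: "hsf la ka" and szk: "sz L ka + a N = sz L la" using ka by (auto simp: HSd_def)
  have kle: "\<forall>i. ka i \<le> la i" using hs by (simp add: hsf_def)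
  have sub: "cellsf ka \<subseteq> cellsf la" using cellsf_mono[OF kle] .
  have lak: "la (Suc i) \<le> ka i" for i using hs by (simp add: hsf_def)
  have Tlt: "\<forall>c\<in>cellsf ka. T c < N" using T(1) by (simp add: ssytf_def)
  have E1: "\<forall>c\<in>cellsf la. ?E c < Suc N" using Tlt by (auto simp: extT_def less_Suc_eq)
  have E2: "\<forall>c. c \<notin> cellsf la \<longrightarrow> ?E c = 0" using sub by (auto simp: extT_def)
  have E3: "\<forall>i j. (i, Suc j) \<in> cellsf la \<longrightarrow> ?E (i, j) \<le> ?E (i, Suc j)"
  proof (intro allI impI)
    fix i j assume c: "(i, Suc j) \<in> cellsf la"
    have cl: "(i, j) \<in> cellsf la" using c by (auto simp: cellsf_def)
    show "?E (i, j) \<le> ?E (i, Suc j)"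
    proof (cases "(i, Suc j) \<in> cellsf ka")
      case True
      then have "(i, j) \<in> cellsf ka" by (auto simp: cellsf_def)
      then show ?thesis using True T(1) by (simp add: extT_def ssytf_def)
    next
      case False
      have "?E (i, j) \<le> N" using cl Tlt by (auto simp: extT_def less_imp_le)
      then show ?thesis using False c by (simp add: extT_def)
    qed
  qed
  have E4: "\<forall>i j. (Suc i, j) \<in> cellsf la \<longrightarrow> ?E (i, j) < ?E (Suc i, j)"
  proof (intro allI impI)
    fix i j assume c: "(Suc i, j) \<in> cellsf la"
    have ck: "(i, j) \<in> cellsf ka" using c lak[of i] by (auto simp: cellsf_def)
    show "?E (i, j) < ?E (Suc i, j)"
    proof (cases "(Suc i, j) \<in> cellsf ka")
      case True
      then show ?thesis using ck T(1) by (simp add: extT_def ssytf_def)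
    next
      case False
      then show ?thesis using ck c Tlt by (simp add: extT_def)
    qed
  qed
  have inS: "?E \<in> ssytf (Suc N) la" using E1 E2 E3 E4 by (simp add: ssytf_def)
  have cntv: "cnt la ?E v = a v" if v: "v < Suc N" for v
  proof (cases "v < N")
    case True
    have "{c\<in>cellsf la. ?E c = v} = {c\<in>cellsf ka. T c = v}"
      using sub True by (auto simp: extT_def)
    then show ?thesis using T(2) True by (simp add: cnt_def)
  next
    case False
    then have vN: "v = N" using v by simp
    have "{c\<in>cellsf la. ?E c = v} = cellsf la - cellsf ka"
      using sub Tlt vN by (auto simp: extT_def)
    then have "cnt la ?E v = sz L la - sz L ka"
      using card_cells_diff[OF _ kle] pla by (simp add: cnt_def pfun_def)
    then show ?thesis using szk vN by simp
  qed
  show ?thesis using inS cntv by blast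
qed

definition kaT :: "(nat \<times> nat \<Rightarrow> nat) \<Rightarrow> nat \<Rightarrow> nat" where
  "kaT T i = card {j. j < la i \<and> T (i, j) < N}"

definition resT :: "(nat \<times> nat \<Rightarrow> nat) \<Rightarrow> (nat \<times> nat \<Rightarrow> nat)" where
  "resT T c = (if c \<in> cellsf (kaT T) then T c else 0)"

lemma kaT_cells:
  assumes T: "T \<in> ssytf (Suc N) la"
  shows "cellsf (kaT T) = {c\<in>cellsf la. T c < N}"
proof -
  have "{j. j < la i \<and> T (i, j) < N} = {..<kaT T i}" for i
    unfolding kaT_def
  proof (rule downclosed_eq)
    show "finite {j. j < la i \<and> T (i, j) < N}" by simp
    show "\<forall>j\<in>{j. j < la i \<and> T (i, j) < N}. \<forall>j'\<le>j. j' \<in> {j. j < la i \<and> T (i, j) < N}"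
    proof (intro ballI allI impI)
      fix j j' assume j: "j \<in> {j. j < la i \<and> T (i, j) < N}" and "j' \<le> j"
      then have "T (i, j') \<le> T (i, j)" using row_mono[OF T, of i j j'] by (simp add: cellsf_def)
      then show "j' \<in> {j. j < la i \<and> T (i, j) < N}" using j \<open>j' \<le> j\<close> by auto
    qed
  qed
  then show ?thesis by (auto simp: cellsf_def set_eq_iff)
qed

lemma res_in:
  assumes T: "T \<in> ssytf (Suc N) la" "\<forall>v<Suc N. cnt la T v = a v"
  shows "kaT T \<in> HSd L la (a N) \<and> resT T \<in> ssytf N (kaT T) \<and> (\<forall>v<N. cnt (kaT T) (resT T) v = a v)
     \<and> extT la (kaT T) N (resT T) = T"
proof -
  let ?k = "kaT T"
  have kc: "cellsf ?k = {c\<in>cellsf la. T c < N}" by (rule kaT_cells[OF T(1)])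
  have Tle: "\<forall>c\<in>cellsf la. T c \<le> N" using T(1) by (auto simp: ssytf_def less_Suc_eq_le)
  have kle: "?k i \<le> la i" for i
  proof -
    have "{j. j < la i \<and> T (i, j) < N} \<subseteq> {..<la i}" by auto
    then show ?thesis unfolding kaT_def by (metis card_lessThan card_mono finite_lessThan)
  qed
  have anti: "la (Suc i) \<le> la i" for i using pla by (simp add: pfun_def)
  have lak: "la (Suc i) \<le> ?k i" for i
  proof -
    have "j < ?k i" if j: "j < la (Suc i)" for j
    proof -
      have c1: "(Suc i, j) \<in> cellsf la" using j by (simp add: cellsf_def)
      have c0: "(i, j) \<in> cellsf la" using j anti[of i] by (simp add: cellsf_def)
      have "T (i, j) < T (Suc i, j)" using T(1) c1 by (simp add: ssytf_def)
      also have "\<dots> \<le> N" using Tle c1 by blast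
      finally have "(i, j) \<in> cellsf ?k" using kc c0 by simp
      then show ?thesis by (simp add: cellsf_def)
    qed
    then show ?thesis by (meson not_le less_irrefl)
  qed
  have hs: "hsf la ?k" using kle lak by (simp add: hsf_def)
  have diff: "cellsf la - cellsf ?k = {c\<in>cellsf la. T c = N}"
    using kc Tle by (auto simp: le_less)
  have "sz L la - sz L ?k = a N"
    using card_cells_diff[of L la ?k] pla kle diff T(2) by (simp add: pfun_def cnt_def)
  moreover have "sz L ?k \<le> sz L la" unfolding sz_def by (rule sum_mono) (simp add: kle)
  ultimately have szk: "sz L ?k + a N = sz L la" by simp
  have inD: "?k \<in> HSd L la (a N)" using hs szk by (simp add: HSd_def)
  have R1: "\<forall>c\<in>cellsf ?k. resT T c < N" using kc by (simp add: resT_def)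
  have R2: "\<forall>c. c \<notin> cellsf ?k \<longrightarrow> resT T c = 0" by (simp add: resT_def)
  have R3: "\<forall>i j. (i, Suc j) \<in> cellsf ?k \<longrightarrow> resT T (i, j) \<le> resT T (i, Suc j)"
  proof (intro allI impI)
    fix i j assume c: "(i, Suc j) \<in> cellsf ?k"
    then have c0: "(i, j) \<in> cellsf ?k" by (simp add: cellsf_def)
    have "(i, Suc j) \<in> cellsf la" using c kc by simp
    then show "resT T (i, j) \<le> resT T (i, Suc j)" using c c0 T(1) by (simp add: resT_def ssytf_def)
  qed
  have R4: "\<forall>i j. (Suc i, j) \<in> cellsf ?k \<longrightarrow> resT T (i, j) < resT T (Suc i, j)"
  proof (intro allI impI)
    fix i j assume c: "(Suc i, j) \<in> cellsf ?k"
    then have "j < ?k (Suc i)" by (simp add: cellsf_def)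
    then have "j < ?k i" using kle[of "Suc i"] lak[of i] by linarith
    then have c0: "(i, j) \<in> cellsf ?k" by (simp add: cellsf_def)
    have "(Suc i, j) \<in> cellsf la" using c kc by simp
    then show "resT T (i, j) < resT T (Suc i, j)" using c c0 T(1) by (simp add: resT_def ssytf_def)
  qed
  have inS: "resT T \<in> ssytf N ?k" using R1 R2 R3 R4 by (simp add: ssytf_def)
  have cntv: "cnt ?k (resT T) v = a v" if v: "v < N" for v
  proof -
    have "{c\<in>cellsf ?k. resT T c = v} = {c\<in>cellsf la. T c = v}"
      using kc v by (auto simp: resT_def)
    then show ?thesis using T(2) v by (simp add: cnt_def)
  qed
  have ext: "extT la ?k N (resT T) = T"
  proof
    fix c show "extT la ?k N (resT T) c = T c"
    proof (cases "c \<in> cellsf ?k")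
      case True then show ?thesis by (simp add: extT_def resT_def)
    next
      case False
      show ?thesis
      proof (cases "c \<in> cellsf la")
        case True
        then have "T c = N" using False kc Tle by (auto simp: le_less)
        then show ?thesis using True False by (simp add: extT_def)
      next
        case False2: False
        then have "T c = 0" using T(1) by (simp add: ssytf_out)
        then show ?thesis using False False2 by (simp add: extT_def)
      qed
    qed
  qed
  show ?thesis using inD inS cntv ext by blast
qed

lemma branch:
  "Kf (Suc N) la a = (\<Sum>ka\<in>HSd L la (a N). Kf N ka a)"
proof -
  let ?X = "{T\<in>ssytf (Suc N) la. \<forall>v<Suc N. cnt la T v = a v}"
  let ?Y = "\<lambda>ka. {T\<in>ssytf N ka. \<forall>v<N. cnt ka T v = a v}"
  let ?D = "HSd L la (a N)"
  have bla: "bnd L la" using pla by (simp add: pfun_def)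
  have finD: "finite ?D" by (rule finite_HSd[OF bla])
  have finY: "\<forall>ka\<in>?D. finite (?Y ka)"
  proof
    fix ka assume "ka \<in> ?D"
    then have "bnd L ka" using bla bnd_le hsf_le by (metis (no_types, lifting) HSd_def mem_Collect_eq)
    then show "finite (?Y ka)" using finite_ssytf by simp
  qed
  have bij: "bij_betw (\<lambda>p. extT la (fst p) N (snd p)) (Sigma ?D ?Y) ?X"
  proof (rule bij_betw_byWitness[where f'="\<lambda>T. (kaT T, resT T)"])
    show "\<forall>p\<in>Sigma ?D ?Y. (kaT (extT la (fst p) N (snd p)), resT (extT la (fst p) N (snd p))) = p"
    proof
      fix p assume p: "p \<in> Sigma ?D ?Y"
      obtain ka T where pe: "p = (ka, T)" by (cases p)
      have kD: "ka \<in> ?D" and TY: "T \<in> ?Y ka" using p pe by auto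
      let ?E = "extT la ka N T"
      have EX: "?E \<in> ?X" using ext_in[OF kD] TY by auto
      have R: "kaT ?E \<in> ?D \<and> resT ?E \<in> ssytf N (kaT ?E) \<and> extT la (kaT ?E) N (resT ?E) = ?E"
        using res_in[of ?E] EX by auto
      have kle: "\<forall>i. ka i \<le> la i" using kD by (simp add: HSd_def hsf_def)
      have Tlt: "\<forall>c\<in>cellsf ka. T c < N" using TY by (simp add: ssytf_def)
      have "cellsf (kaT ?E) = {c\<in>cellsf la. ?E c < N}" using kaT_cells EX by blast
      also have "\<dots> = cellsf ka" using cellsf_mono[OF kle] Tlt by (auto simp: extT_def)
      finally have k1: "kaT ?E = ka" by (rule cellsf_inj)
      have "resT ?E = T"
      proof
        fix c show "resT ?E c = T c"
          using k1 TY by (cases "c \<in> cellsf ka") (auto simp: resT_def extT_def ssytf_out)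
      qed
      then show "(kaT (extT la (fst p) N (snd p)), resT (extT la (fst p) N (snd p))) = p" using k1 pe by simp
    qed
    show "\<forall>T\<in>?X. extT la (fst (kaT T, resT T)) N (snd (kaT T, resT T)) = T"
      using res_in by auto
    show "(\<lambda>p. extT la (fst p) N (snd p)) ` Sigma ?D ?Y \<subseteq> ?X"
      using ext_in by auto
    show "(\<lambda>T. (kaT T, resT T)) ` ?X \<subseteq> Sigma ?D ?Y"
      using res_in by auto
  qed
  have "Kf (Suc N) la a = card ?X" by (simp add: Kf_def)
  also have "\<dots> = card (Sigma ?D ?Y)" using bij_betw_same_card[OF bij] by simp
  also have "\<dots> = (\<Sum>ka\<in>?D. card (?Y ka))" by (rule card_SigmaI[OF finD finY])
  also have "\<dots> = (\<Sum>ka\<in>?D. Kf N ka a)" by (simp add: Kf_def)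
  finally show ?thesis .
qed

end


definition G :: "nat \<Rightarrow> (nat \<Rightarrow> nat) \<Rightarrow> nat \<Rightarrow> (nat \<Rightarrow> nat) set" where
  "G N a k = {g. (\<forall>i<N. g i \<le> a i) \<and> (\<forall>i\<ge>N. g i = 0) \<and> sum g {..<N} = k}"

definition HS :: "nat \<Rightarrow> (nat \<Rightarrow> nat) \<Rightarrow> nat \<Rightarrow> (nat \<Rightarrow> nat) set" where
  "HS L mu k = {la. hsf la mu \<and> sz L la = sz L mu + k}"

lemma finite_G: "finite (G N a k)"
proof (rule finite_subset[OF _ finite_bounded_funs[of k N]])
  show "G N a k \<subseteq> {f. (\<forall>i. f i \<le> k) \<and> bnd N f}"
  proof safe
    fix g i assume g: "g \<in> G N a k"
    show "g i \<le> k"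
    proof (cases "i < N")
      case True then show ?thesis using g member_le_sum[of i "{..<N}" g] by (auto simp: G_def)
    next
      case False then show ?thesis using g by (auto simp: G_def)
    qed
    show "bnd N g" using g by (auto simp: G_def bnd_def)
  qed
qed

lemma hsf_bnd_Suc: "hsf la mu \<Longrightarrow> bnd L mu \<Longrightarrow> bnd (Suc L) la"
  unfolding hsf_def bnd_def by (metis Suc_le_D le_zero_eq not_less_eq_eq)

lemma finite_HS:
  assumes "bnd L mu" shows "finite (HS (Suc L) mu k)"
proof (rule finite_subset[OF _ finite_bounded_funs[of "sz (Suc L) mu + k" "Suc L"]])
  show "HS (Suc L) mu k \<subseteq> {f. (\<forall>i. f i \<le> sz (Suc L) mu + k) \<and> bnd (Suc L) f}"
  proof safe
    fix la i assume la: "la \<in> HS (Suc L) mu k"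
    then have b: "bnd (Suc L) la" using hsf_bnd_Suc assms by (auto simp: HS_def)
    show "la i \<le> sz (Suc L) mu + k"
    proof (cases "i < Suc L")
      case True then show ?thesis using le_sz[OF True, of la] la by (simp add: HS_def)
    next
      case False then show ?thesis using b by (simp add: bnd_def)
    qed
    show "bnd (Suc L) la" by (rule b)
  qed
qed

lemma G_Suc:
  "bij_betw (\<lambda>p. (snd p)(N := fst p)) (Sigma {x. x \<le> a N \<and> x \<le> k} (\<lambda>x. G N a (k - x))) (G (Suc N) a k)"
proof (rule bij_betw_byWitness[where f'="\<lambda>h. (h N, h(N := 0))"])
  show "\<forall>p\<in>Sigma {x. x \<le> a N \<and> x \<le> k} (\<lambda>x. G N a (k - x)). (((snd p)(N := fst p)) N, ((snd p)(N := fst p))(N := 0)) = p"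
    by (auto simp: G_def fun_eq_iff)
  show "\<forall>h\<in>G (Suc N) a k. (snd (h N, h(N := 0)))(N := fst (h N, h(N := 0))) = h"
    by auto
  show "(\<lambda>p. (snd p)(N := fst p)) ` Sigma {x. x \<le> a N \<and> x \<le> k} (\<lambda>x. G N a (k - x)) \<subseteq> G (Suc N) a k"
  proof safe
    fix x g assume x: "x \<le> a N" "x \<le> k" and g: "g \<in> G N a (k - x)"
    have s: "sum (g(N := x)) {..<N} = sum g {..<N}" by (rule sum.cong) auto
    show "(snd (x, g))(N := fst (x, g)) \<in> G (Suc N) a k"
      using x g s by (auto simp: G_def less_Suc_eq)
  qed
  show "(\<lambda>h. (h N, h(N := 0))) ` G (Suc N) a k \<subseteq> Sigma {x. x \<le> a N \<and> x \<le> k} (\<lambda>x. G N a (k - x))"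
  proof safe
    fix h assume h: "h \<in> G (Suc N) a k"
    have s: "sum (h(N := 0)) {..<N} = sum h {..<N}" by (rule sum.cong) auto
    have t: "sum h {..<Suc N} = k" using h by (simp add: G_def)
    show "h N \<le> a N" using h by (simp add: G_def)
    show "h N \<le> k" using t by simp
    show "h(N := 0) \<in> G N a (k - h N)" using h s t by (auto simp: G_def)
  qed
qed

lemma sum_group_count:
  assumes "finite A" "\<forall>x\<in>A. B x \<subseteq> R" "finite R"
  shows "(\<Sum>x\<in>A. \<Sum>y\<in>B x. f y) = (\<Sum>r\<in>R. of_nat (card {x\<in>A. r \<in> B x}) * (f r :: 'a :: comm_semiring_1))"
proof -
  have "(\<Sum>x\<in>A. \<Sum>y\<in>B x. f y) = (\<Sum>x\<in>A. \<Sum>r\<in>R. if r \<in> B x then f r else 0)"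
  proof (rule sum.cong)
    fix x assume x: "x \<in> A"
    have "B x = {r\<in>R. r \<in> B x}" using assms(2) x by auto
    then have "(\<Sum>y\<in>B x. f y) = (\<Sum>y\<in>{r\<in>R. r \<in> B x}. f y)" by simp
    also have "\<dots> = (\<Sum>r\<in>R. if r \<in> B x then f r else 0)" using sum.inter_filter[OF assms(3)] by simp
    finally show "(\<Sum>y\<in>B x. f y) = (\<Sum>r\<in>R. if r \<in> B x then f r else 0)" .
  qed simp
  also have "\<dots> = (\<Sum>r\<in>R. \<Sum>x\<in>A. if r \<in> B x then f r else 0)" by (rule sum.swap)
  also have "\<dots> = (\<Sum>r\<in>R. of_nat (card {x\<in>A. r \<in> B x}) * f r)"
  proof (rule sum.cong)
    fix r
    have "(\<Sum>x\<in>A. if r \<in> B x then f r else 0) = (\<Sum>x\<in>{x\<in>A. r \<in> B x}. f r)"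
      using sum.inter_filter[OF assms(1), of "\<lambda>_. f r" "\<lambda>x. r \<in> B x"] by simp
    also have "\<dots> = of_nat (card {x\<in>A. r \<in> B x}) * f r" by simp
    finally show "(\<Sum>x\<in>A. if r \<in> B x then f r else 0) = of_nat (card {x\<in>A. r \<in> B x}) * f r" .
  qed simp
  finally show ?thesis .
qed


lemma box_hsf: "k \<in> box A B \<longleftrightarrow> hsf A k \<and> hsf B k"
  by (simp add: box_def)

context
  fixes L :: nat and mu rho :: "nat \<Rightarrow> nat" and e k :: nat
  assumes bmu: "bnd L mu" and brho: "bnd (Suc L) rho"
begin

lemma bmuS: "bnd (Suc L) mu" using bmu by (simp add: bnd_def)

lemma count1:
  "card {p \<in> Sigma {x. x \<le> e \<and> x \<le> k} (\<lambda>x. HSd (Suc L) mu (e - x)). rho \<in> HS (Suc L) (snd p) (k - fst p)}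
   = card {ka\<in>box mu rho. sz (Suc L) mu \<le> sz (Suc L) ka + e \<and> sz (Suc L) rho + e = sz (Suc L) mu + k}"
proof (rule bij_betw_same_card[where f=snd], rule bij_betw_byWitness[where f'="\<lambda>ka. (sz (Suc L) ka + e - sz (Suc L) mu, ka)"])
  let ?S = "Suc L"
  let ?A = "{p \<in> Sigma {x. x \<le> e \<and> x \<le> k} (\<lambda>x. HSd ?S mu (e - x)). rho \<in> HS ?S (snd p) (k - fst p)}"
  let ?B = "{ka\<in>box mu rho. sz ?S mu \<le> sz ?S ka + e \<and> sz ?S rho + e = sz ?S mu + k}"
  have A_iff: "p \<in> ?A \<longleftrightarrow> snd p \<in> ?B \<and> fst p = sz ?S (snd p) + e - sz ?S mu" for p
  proof -
    obtain x ka where p: "p = (x, ka)" by (cases p)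
    show ?thesis
    proof
      assume "p \<in> ?A"
      then have x: "x \<le> e" "x \<le> k" and h1: "hsf mu ka" and s1: "sz ?S ka + (e - x) = sz ?S mu"
        and h2: "hsf rho ka" and s2: "sz ?S rho = sz ?S ka + (k - x)"
        using p by (auto simp: HSd_def HS_def)
      have "snd p \<in> ?B" using p h1 h2 s1 s2 x by (auto simp: box_def)
      moreover have "fst p = sz ?S (snd p) + e - sz ?S mu" using p s1 x by simp
      ultimately show "snd p \<in> ?B \<and> fst p = sz ?S (snd p) + e - sz ?S mu" by simp
    next
      assume a: "snd p \<in> ?B \<and> fst p = sz ?S (snd p) + e - sz ?S mu"
      then have kb: "ka \<in> box mu rho" and c1: "sz ?S mu \<le> sz ?S ka + e" and c2: "sz ?S rho + e = sz ?S mu + k"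
        and xe: "x = sz ?S ka + e - sz ?S mu" using p by auto
      have le1: "sz ?S ka \<le> sz ?S mu" "sz ?S ka \<le> sz ?S rho" using sz_box_le2[OF kb] by auto
      have "x \<le> e" "x \<le> k" using xe le1 c1 c2 by linarith+
      moreover have "sz ?S ka + (e - x) = sz ?S mu" using xe le1 c1 by linarith
      moreover have "sz ?S rho = sz ?S ka + (k - x)" using xe le1 c1 c2 by linarith
      ultimately show "p \<in> ?A" using p kb by (auto simp: HSd_def HS_def box_def)
    qed
  qed
  show "\<forall>p\<in>?A. (sz ?S (snd p) + e - sz ?S mu, snd p) = p" using A_iff by auto
  show "\<forall>ka\<in>?B. snd (sz ?S ka + e - sz ?S mu, ka) = ka" by simp
  show "snd ` ?A \<subseteq> ?B" using A_iff by blast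
  show "(\<lambda>ka. (sz ?S ka + e - sz ?S mu, ka)) ` ?B \<subseteq> ?A" using A_iff by auto
qed

definition shl :: "(nat \<Rightarrow> nat) \<Rightarrow> nat \<Rightarrow> nat" where
  "shl la i = la (Suc i)"

definition unshl :: "(nat \<Rightarrow> nat) \<Rightarrow> nat \<Rightarrow> nat" where
  "unshl t i = (case i of 0 \<Rightarrow> sz (Suc L) mu + k - sz (Suc L) t | Suc j \<Rightarrow> t j)"

lemma sz_shift: "la (Suc L) = 0 \<Longrightarrow> sz (Suc L) la = la 0 + sz (Suc L) (\<lambda>i. la (Suc i))"
  unfolding sz_def by (subst sum.lessThan_Suc_shift) simp

lemma count2:
  "card {la \<in> HS (Suc L) mu k. rho \<in> HSd (Suc L) la e}
   = card {t\<in>box mu rho. max (mu 0) (rho 0) + sz (Suc L) t \<le> sz (Suc L) mu + k \<and> sz (Suc L) rho + e = sz (Suc L) mu + k}"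
proof (rule bij_betw_same_card[where f="\<lambda>la i. la (Suc i)"], rule bij_betw_byWitness[where f'=unshl])
  let ?S = "Suc L"
  let ?A = "{la \<in> HS ?S mu k. rho \<in> HSd ?S la e}"
  let ?B = "{t\<in>box mu rho. max (mu 0) (rho 0) + sz ?S t \<le> sz ?S mu + k \<and> sz ?S rho + e = sz ?S mu + k}"
  have muL: "mu L = 0" using bmu by (simp add: bnd_def)
  show "\<forall>la\<in>?A. unshl (\<lambda>i. la (Suc i)) = la"
  proof
    fix la assume la: "la \<in> ?A"
    then have h: "hsf la mu" and s: "sz ?S la = sz ?S mu + k" by (auto simp: HS_def)
    have "la (Suc L) = 0" using h muL by (metis hsf_def le_zero_eq)
    then have "sz ?S la = la 0 + sz ?S (\<lambda>i. la (Suc i))" by (rule sz_shift)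
    then show "unshl (\<lambda>i. la (Suc i)) = la" using s by (auto simp: unshl_def fun_eq_iff split: nat.splits)
  qed
  show "\<forall>t\<in>?B. (\<lambda>i. unshl t (Suc i)) = t" by (simp add: unshl_def)
  show "(\<lambda>la i. la (Suc i)) ` ?A \<subseteq> ?B"
  proof safe
    fix la assume "la \<in> HS ?S mu k" "rho \<in> HSd ?S la e"
    then have h: "hsf la mu" and s: "sz ?S la = sz ?S mu + k" and h2: "hsf la rho"
      and s2: "sz ?S rho + e = sz ?S la" by (auto simp: HS_def HSd_def)
    have "la (Suc L) = 0" using h muL by (metis hsf_def le_zero_eq)
    then have s3: "sz ?S la = la 0 + sz ?S (\<lambda>i. la (Suc i))" by (rule sz_shift)
    show "(\<lambda>i. la (Suc i)) \<in> box mu rho" using h h2 by (auto simp: box_def hsf_def)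
    have "mu 0 \<le> la 0" "rho 0 \<le> la 0" using h h2 by (auto simp: hsf_def)
    then show "max (mu 0) (rho 0) + sz ?S (\<lambda>i. la (Suc i)) \<le> sz ?S mu + k" using s s3 by simp
    show "sz ?S rho + e = sz ?S mu + k" using s s2 by simp
  qed
  show "unshl ` ?B \<subseteq> ?A"
  proof safe
    fix t assume t: "t \<in> box mu rho" and c1: "max (mu 0) (rho 0) + sz ?S t \<le> sz ?S mu + k"
      and c2: "sz ?S rho + e = sz ?S mu + k"
    let ?la = "unshl t"
    have tL: "t L = 0" using box_le[OF t, of L] muL by simp
    have sh: "(\<lambda>i. ?la (Suc i)) = t" by (simp add: unshl_def)
    have l0: "?la 0 = sz ?S mu + k - sz ?S t" by (simp add: unshl_def)
    have "sz ?S ?la = ?la 0 + sz ?S (\<lambda>i. ?la (Suc i))" by (rule sz_shift) (simp add: unshl_def tL)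
    then have sla: "sz ?S ?la = sz ?S mu + k" using sh l0 c1 by simp
    have l0ge: "mu 0 \<le> ?la 0" "rho 0 \<le> ?la 0" using l0 c1 by auto
    have h: "hsf ?la mu"
      unfolding hsf_def
    proof
      fix i show "?la (Suc i) \<le> mu i \<and> mu i \<le> ?la i"
        using t l0ge by (cases i) (auto simp: box_def hsf_def unshl_def)
    qed
    have h2: "hsf ?la rho"
      unfolding hsf_def
    proof
      fix i show "?la (Suc i) \<le> rho i \<and> rho i \<le> ?la i"
        using t l0ge by (cases i) (auto simp: box_def hsf_def unshl_def)
    qed
    show "?la \<in> HS ?S mu k" using h sla by (simp add: HS_def)
    show "rho \<in> HSd ?S ?la e" using h2 sla c2 by (simp add: HSd_def)
  qed
qed

lemma count_eq:
  "card {p \<in> Sigma {x. x \<le> e \<and> x \<le> k} (\<lambda>x. HSd (Suc L) mu (e - x)). rho \<in> HS (Suc L) (snd p) (k - fst p)}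
   = card {la \<in> HS (Suc L) mu k. rho \<in> HSd (Suc L) la e}"
proof -
  let ?S = "Suc L"
  let ?M = "max (mu 0) (rho 0)"
  let ?T = "sz ?S mu + sz ?S rho - ?M"
  let ?Q = "sz ?S rho + e = sz ?S mu + k"
  have "card {t\<in>box mu rho. ?M + sz ?S t \<le> sz ?S mu + k \<and> ?Q}
      = card {t\<in>box mu rho. ?M + (?T - sz ?S t) \<le> sz ?S mu + k \<and> ?Q}"
    using box_card_sym[OF bmuS brho, of "\<lambda>s. ?M + s \<le> sz ?S mu + k \<and> ?Q"] by simp
  also have "\<dots> = card {ka\<in>box mu rho. sz ?S mu \<le> sz ?S ka + e \<and> ?Q}"
  proof (rule arg_cong[where f=card], rule Collect_cong, rule conj_cong[OF refl])
    fix t assume t: "t \<in> box mu rho"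
    have le: "sz ?S t \<le> ?T" using sz_box_le[OF t bmuS brho] .
    have m1: "mu 0 \<le> sz ?S mu" "rho 0 \<le> sz ?S rho" using le_sz[of 0 "Suc L"] by auto
    show "(?M + (?T - sz ?S t) \<le> sz ?S mu + k \<and> ?Q) = (sz ?S mu \<le> sz ?S t + e \<and> ?Q)"
      using le m1 by (cases "mu 0 \<le> rho 0") (auto simp: max_def)
  qed
  finally show ?thesis using count1 count2 by simp
qed

end


lemma pfun_HS: "la \<in> HS (Suc L) mu k \<Longrightarrow> bnd L mu \<Longrightarrow> pfun (Suc L) la"
  unfolding pfun_def HS_def using hsf_bnd_Suc by (auto simp: hsf_def) (meson le_trans)

lemma pfun_HSd: "ka \<in> HSd L' la e \<Longrightarrow> bnd L' la \<Longrightarrow> pfun L' ka"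
  unfolding HSd_def using hsf_pfun by blast

lemma G_0: "G 0 a k = (if k = 0 then {\<lambda>_. 0} else {})"
  by (auto simp: G_def fun_eq_iff)

lemma pieri_f:
  "pfun L mu \<Longrightarrow> (\<Sum>g\<in>G N a k. Kf N mu (\<lambda>i. a i - g i)) = (\<Sum>la\<in>HS (Suc L) mu k. Kf N la a)"
proof (induction N arbitrary: mu a k)
  case 0
  have bmu: "bnd L mu" using 0 by (simp add: pfun_def)
  have "(\<Sum>la\<in>HS (Suc L) mu k. Kf 0 la a) = (\<Sum>la\<in>HS (Suc L) mu k. if la = (\<lambda>_. 0) then 1 else 0)"
    by (rule sum.cong) (auto simp: Kf_0 fun_eq_iff)
  also have "\<dots> = (if (\<lambda>_. 0) \<in> HS (Suc L) mu k then 1 else 0)"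
    by (rule sum.delta[OF finite_HS[OF bmu]])
  also have "\<dots> = (if k = 0 \<and> (\<forall>i. mu i = 0) then 1 else 0)"
    by (auto simp: HS_def hsf_def sz_def)
  finally show ?case by (simp add: G_0 Kf_0)
next
  case (Suc N)
  let ?S = "Suc L"
  let ?X0 = "{x. x \<le> a N \<and> x \<le> k}"
  have bmu: "bnd L mu" and pS: "pfun ?S mu" using Suc.prems by (auto simp: pfun_def bnd_def)
  have finX0: "finite ?X0" by simp
  have bS: "bnd ?S mu" using bmu by (simp add: bnd_def)
  let ?R = "{rho. (\<forall>i. rho i \<le> sz ?S mu + k) \<and> bnd ?S rho}"
  have finR: "finite ?R" by (rule finite_bounded_funs)
  have "(\<Sum>g\<in>G (Suc N) a k. Kf (Suc N) mu (\<lambda>i. a i - g i))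
      = (\<Sum>p\<in>Sigma ?X0 (\<lambda>x. G N a (k - x)). Kf (Suc N) mu (\<lambda>i. a i - ((snd p)(N := fst p)) i))"
    using sum.reindex_bij_betw[OF G_Suc, of "\<lambda>g. Kf (Suc N) mu (\<lambda>i. a i - g i)"] by simp
  also have "\<dots> = (\<Sum>x\<in>?X0. \<Sum>g\<in>G N a (k - x). Kf (Suc N) mu (\<lambda>i. a i - (g(N := x)) i))"
    by (subst sum.Sigma[OF finX0]) (auto simp: finite_G case_prod_beta)
  also have "\<dots> = (\<Sum>x\<in>?X0. \<Sum>g\<in>G N a (k - x). \<Sum>ka\<in>HSd ?S mu (a N - x). Kf N ka (\<lambda>i. a i - g i))"
  proof (intro sum.cong refl)
    fix x g
    have "Kf (Suc N) mu (\<lambda>i. a i - (g(N := x)) i) = (\<Sum>ka\<in>HSd ?S mu (a N - x). Kf N ka (\<lambda>i. a i - (g(N := x)) i))"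
      using branch[OF pS] by simp
    also have "\<dots> = (\<Sum>ka\<in>HSd ?S mu (a N - x). Kf N ka (\<lambda>i. a i - g i))"
      by (intro sum.cong refl Kf_cong) auto
    finally show "Kf (Suc N) mu (\<lambda>i. a i - (g(N := x)) i) = (\<Sum>ka\<in>HSd ?S mu (a N - x). Kf N ka (\<lambda>i. a i - g i))" .
  qed
  also have "\<dots> = (\<Sum>x\<in>?X0. \<Sum>ka\<in>HSd ?S mu (a N - x). \<Sum>g\<in>G N a (k - x). Kf N ka (\<lambda>i. a i - g i))"
    by (intro sum.cong refl sum.swap)
  also have "\<dots> = (\<Sum>x\<in>?X0. \<Sum>ka\<in>HSd ?S mu (a N - x). \<Sum>rho\<in>HS ?S ka (k - x). Kf N rho a)"
  proof (rule sum.cong[OF refl], rule sum.cong[OF refl])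
    fix x ka assume ka: "ka \<in> HSd ?S mu (a N - x)"
    have "pfun L ka" using ka bmu hsf_pfun[of mu ka L] by (simp add: HSd_def)
    then show "(\<Sum>g\<in>G N a (k - x). Kf N ka (\<lambda>i. a i - g i)) = (\<Sum>rho\<in>HS ?S ka (k - x). Kf N rho a)"
      by (rule Suc.IH)
  qed
  also have "\<dots> = (\<Sum>p\<in>Sigma ?X0 (\<lambda>x. HSd ?S mu (a N - x)). \<Sum>rho\<in>HS ?S (snd p) (k - fst p). Kf N rho a)"
    by (subst sum.Sigma[OF finX0]) (auto simp: finite_HSd[OF bS] case_prod_beta)
  also have "\<dots> = (\<Sum>rho\<in>?R. of_nat (card {p\<in>Sigma ?X0 (\<lambda>x. HSd ?S mu (a N - x)). rho \<in> HS ?S (snd p) (k - fst p)}) * Kf N rho a)"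
  proof (rule sum_group_count[OF _ _ finR])
    show "finite (Sigma ?X0 (\<lambda>x. HSd ?S mu (a N - x)))"
      using finite_HSd[OF bS] by auto
    show "\<forall>p\<in>Sigma ?X0 (\<lambda>x. HSd ?S mu (a N - x)). HS ?S (snd p) (k - fst p) \<subseteq> ?R"
    proof (intro ballI subsetI)
      fix p rho assume p: "p \<in> Sigma ?X0 (\<lambda>x. HSd ?S mu (a N - x))" and rho: "rho \<in> HS ?S (snd p) (k - fst p)"
      have hk: "hsf mu (snd p)" using p by (auto simp: HSd_def)
      have bk: "bnd L (snd p)" using hk bmu bnd_le hsf_le by metis
      have "sz ?S (snd p) \<le> sz ?S mu" unfolding sz_def by (rule sum_mono) (simp add: hsf_le[OF hk])
      moreover have "sz ?S rho = sz ?S (snd p) + (k - fst p)" using rho by (simp add: HS_def)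
      ultimately have szr: "sz ?S rho \<le> sz ?S mu + k" by simp
      have br: "bnd ?S rho" using rho bk hsf_bnd_Suc by (auto simp: HS_def)
      have "rho i \<le> sz ?S mu + k" for i
      proof (cases "i < ?S")
        case True then show ?thesis using le_sz[OF True, of rho] szr by simp
      next
        case False then show ?thesis using br by (simp add: bnd_def)
      qed
      then show "rho \<in> ?R" using br by simp
    qed
  qed
  also have "\<dots> = (\<Sum>rho\<in>?R. of_nat (card {la\<in>HS ?S mu k. rho \<in> HSd ?S la (a N)}) * Kf N rho a)"
  proof (rule sum.cong[OF refl])
    fix rho assume "rho \<in> ?R"
    then have "bnd ?S rho" by simp
    then show "of_nat (card {p\<in>Sigma ?X0 (\<lambda>x. HSd ?S mu (a N - x)). rho \<in> HS ?S (snd p) (k - fst p)}) * Kf N rho a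
        = of_nat (card {la\<in>HS ?S mu k. rho \<in> HSd ?S la (a N)}) * Kf N rho a"
      using count_eq[OF bmu, of rho "a N" k] by simp
  qed
  also have "\<dots> = (\<Sum>la\<in>HS ?S mu k. \<Sum>rho\<in>HSd ?S la (a N). Kf N rho a)"
  proof (rule sum_group_count[OF finite_HS[OF bmu] _ finR, symmetric])
    show "\<forall>la\<in>HS ?S mu k. HSd ?S la (a N) \<subseteq> ?R"
    proof (intro ballI subsetI)
      fix la rho assume la: "la \<in> HS ?S mu k" and rho: "rho \<in> HSd ?S la (a N)"
      have bla: "bnd ?S la" using la bmu hsf_bnd_Suc by (auto simp: HS_def)
      have hr: "hsf la rho" using rho by (simp add: HSd_def)
      have br: "bnd ?S rho" using bla hr bnd_le hsf_le by metis
      have "rho i \<le> sz ?S mu + k" for i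
      proof (cases "i < ?S")
        case True then show ?thesis using le_sz[OF True, of la] la hsf_le[OF hr, of i] by (simp add: HS_def)
      next
        case False then show ?thesis using br by (simp add: bnd_def)
      qed
      then show "rho \<in> ?R" using br by simp
    qed
  qed
  also have "\<dots> = (\<Sum>la\<in>HS ?S mu k. Kf (Suc N) la a)"
  proof (rule sum.cong[OF refl])
    fix la assume "la \<in> HS ?S mu k"
    then have "pfun ?S la" using pfun_HS bmu by blast
    then show "(\<Sum>rho\<in>HSd ?S la (a N). Kf N rho a) = Kf (Suc N) la a" using branch by simp
  qed
  finally show ?case .
qed


definition pad :: "nat list \<Rightarrow> nat \<Rightarrow> nat" where
  "pad la i = (if i < length la then la ! i else 0)"

lemma cells_pad: "cells la = cellsf (pad la)"
  by (auto simp: cells_def cellsf_def pad_def split: if_splits)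

lemma ssyt_pad: "ssyt N la = ssytf N (pad la)"
  by (simp add: ssyt_def ssytf_def cells_pad)

lemma bnd_pad: "length la \<le> L \<Longrightarrow> bnd L (pad la)"
  by (simp add: bnd_def pad_def)

lemma pfun_pad: "is_partition la \<Longrightarrow> length la \<le> L \<Longrightarrow> pfun L (pad la)"
  unfolding pfun_def is_partition_def
  by (auto simp: bnd_pad pad_def sorted_wrt_iff_nth_less)

lemma pad_pos: "is_partition la \<Longrightarrow> i < length la \<Longrightarrow> 0 < pad la i"
  by (simp add: is_partition_def pad_def)

lemma sum_list_pad: "length la \<le> L \<Longrightarrow> sum_list la = sz L (pad la)"
proof -
  assume l: "length la \<le> L"
  have "sum_list la = (\<Sum>i<length la. la ! i)" by (simp add: sum_list_sum_nth atLeast0LessThan)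
  also have "\<dots> = (\<Sum>i<length la. pad la i)" by (rule sum.cong) (auto simp: pad_def)
  also have "\<dots> = (\<Sum>i<L. pad la i)" using l by (intro sum.mono_neutral_left) (auto simp: pad_def)
  finally show ?thesis by (simp add: sz_def)
qed

lemma pad_inj:
  assumes "is_partition la" "is_partition mu" "pad la = pad mu"
  shows "la = mu"
proof -
  have "length la = length mu"
  proof (rule ccontr)
    assume "length la \<noteq> length mu"
    then consider "length la < length mu" | "length mu < length la" by linarith
    then show False
    proof cases
      case 1 then show False using pad_pos[OF assms(2) 1] fun_cong[OF assms(3), of "length la"] by (simp add: pad_def)
    next
      case 2 then show False using pad_pos[OF assms(1) 2] fun_cong[OF assms(3), of "length mu"] by (simp add: pad_def)
    qed
  qed
  moreover have "\<forall>i<length la. la ! i = mu ! i" using assms(3) calculation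
    by (metis pad_def)
  ultimately show ?thesis by (simp add: nth_equalityI)
qed

lemma pad_surj:
  assumes "pfun L f"
  shows "\<exists>la. is_partition la \<and> length la \<le> L \<and> pad la = f"
proof -
  have fL: "f L = 0" using assms by (simp add: pfun_def bnd_def)
  define l where "l = (LEAST i. f i = 0)"
  have fl: "f l = 0" unfolding l_def by (rule LeastI[of _ L]) (rule fL)
  have lL: "l \<le> L" unfolding l_def by (rule Least_le) (rule fL)
  have pos: "i < l \<Longrightarrow> 0 < f i" for i unfolding l_def using not_less_Least by blast
  have anti: "\<forall>i. f (Suc i) \<le> f i" using assms by (simp add: pfun_def)
  have mmono: "f j \<le> f i" if ij: "i \<le> j" for i j
    using ij
  proof (induction j rule: dec_induct)
    case base then show ?case by simp
  next
    case (step j) then show ?case using anti[rule_format, of j] by linarith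
  qed
  let ?la = "map f [0..<l]"
  have "is_partition ?la"
    unfolding is_partition_def by (auto simp: sorted_wrt_iff_nth_less pos mmono)
  moreover have "pad ?la = f"
  proof
    fix i show "pad ?la i = f i"
    proof (cases "i < l")
      case True then show ?thesis by (simp add: pad_def)
    next
      case False then show ?thesis using mmono[of l i] fl by (simp add: pad_def)
    qed
  qed
  ultimately show ?thesis using lL by auto
qed

lemma length_le_sum_list: "is_partition la \<Longrightarrow> length la \<le> sum_list la"
proof -
  assume p: "is_partition la"
  have "\<forall>x\<in>set la. 1 \<le> x" using p by (auto simp: is_partition_def)
  then have "sum_list (map (\<lambda>_. 1::nat) la) \<le> sum_list la"
    by (metis (no_types, lifting) map_ident sum_list_mono)
  then show ?thesis by (simp add: sum_list_triv)
qed

lemma finite_cells: "finite (cells la)"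
  using finite_cellsf[OF bnd_pad[of la "length la"]] by (simp add: cells_pad)

lemma finite_ssyt: "finite (ssyt N la)"
  using finite_ssytf[OF bnd_pad[of la "length la"]] by (simp add: ssyt_pad)

lemma sum_indicator_card: "finite C \<Longrightarrow> (\<Sum>c\<in>C. (1::'a::comm_semiring_1) when P c) = of_nat (card {c\<in>C. P c})"
proof -
  assume fin: "finite C"
  have "(\<Sum>c\<in>C. (1::'a) when P c) = (\<Sum>c\<in>C. if P c then 1 else 0)" by (simp add: when_def)
  also have "\<dots> = (\<Sum>c\<in>{c\<in>C. P c}. 1)" using sum.inter_filter[OF fin, of "\<lambda>_. 1::'a" P] by simp
  also have "\<dots> = of_nat (card {c\<in>C. P c})" by simp
  finally show ?thesis .
qed

lemma lookup_tm: "Poly_Mapping.lookup (tab_monomial la T) i = cnt (pad la) T i"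
proof -
  have "Poly_Mapping.lookup (tab_monomial la T) i = (\<Sum>c\<in>cells la. (1::nat) when T c = i)"
    by (simp add: tab_monomial_def lookup_sum lookup_single)
  also have "\<dots> = card {c\<in>cells la. T c = i}"
    using sum_indicator_card[where C="cells la" and P="\<lambda>c. T c = i" and 'a = nat] finite_cells by simp
  finally show ?thesis by (simp add: cnt_def cells_pad)
qed

lemma cnt_big: "T \<in> ssytf N f \<Longrightarrow> N \<le> i \<Longrightarrow> cnt f T i = 0"
proof -
  assume T: "T \<in> ssytf N f" and i: "N \<le> i"
  have "\<forall>c\<in>cellsf f. T c < N" using T by (simp add: ssytf_def)
  then have "{c\<in>cellsf f. T c = i} = {}" using i by auto
  then show ?thesis unfolding cnt_def by (metis card.empty)
qed

definition H :: "nat \<Rightarrow> nat \<Rightarrow> (nat \<Rightarrow>\<^sub>0 nat) set" where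
  "H N k = {a :: nat \<Rightarrow>\<^sub>0 nat. Poly_Mapping.keys a \<subseteq> {..<N} \<and> (\<Sum>i\<in>Poly_Mapping.keys a. Poly_Mapping.lookup a i) = k}"

lemma H_iff: "a \<in> H N k \<longleftrightarrow> bnd N (Poly_Mapping.lookup a) \<and> sum (Poly_Mapping.lookup a) {..<N} = k"
proof -
  have "Poly_Mapping.keys a \<subseteq> {..<N} \<longleftrightarrow> bnd N (Poly_Mapping.lookup a)"
  proof
    assume "Poly_Mapping.keys a \<subseteq> {..<N}"
    then show "bnd N (Poly_Mapping.lookup a)" unfolding bnd_def
      by (metis in_keys_iff lessThan_iff not_le subsetD)
  next
    assume "bnd N (Poly_Mapping.lookup a)"
    then show "Poly_Mapping.keys a \<subseteq> {..<N}" unfolding bnd_def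
      by (metis in_keys_iff lessThan_iff not_le subsetI)
  qed
  moreover have "Poly_Mapping.keys a \<subseteq> {..<N} \<Longrightarrow>
      (\<Sum>i\<in>Poly_Mapping.keys a. Poly_Mapping.lookup a i) = sum (Poly_Mapping.lookup a) {..<N}"
    by (rule sum.mono_neutral_left) (auto simp: in_keys_iff)
  ultimately show ?thesis by (auto simp: H_def)
qed

lemma finite_H: "finite (H N k)"
proof -
  have "Poly_Mapping.lookup ` H N k \<subseteq> {f. (\<forall>i. f i \<le> k) \<and> bnd N f}"
  proof safe
    fix a i assume a: "a \<in> H N k"
    then have b: "bnd N (Poly_Mapping.lookup a)" and s: "sum (Poly_Mapping.lookup a) {..<N} = k"
      by (auto simp: H_iff)
    show "Poly_Mapping.lookup a i \<le> k"
    proof (cases "i < N")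
      case True then show ?thesis using member_le_sum[of i "{..<N}" "Poly_Mapping.lookup a"] s by simp
    next
      case False then show ?thesis using b by (simp add: bnd_def)
    qed
    show "bnd N (Poly_Mapping.lookup a)" by (rule b)
  qed
  moreover have "inj_on Poly_Mapping.lookup (H N k)"
    by (rule inj_onI) (simp add: poly_mapping_eqI)
  ultimately show ?thesis
    using finite_subset[OF _ finite_bounded_funs] finite_imageD by blast
qed

lemma hcomp_sum: "hcomp N k = (\<Sum>a\<in>H N k. Poly_Mapping.single a 1)"
  by (simp add: hcomp_def H_def)


lemma lookup_schur_card:
  "Poly_Mapping.lookup (schur N la) \<alpha> = int (card {T\<in>ssyt N la. tab_monomial la T = \<alpha>})"
proof -
  have "Poly_Mapping.lookup (schur N la) \<alpha> = (\<Sum>T\<in>ssyt N la. (1::int) when tab_monomial la T = \<alpha>)"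
    by (auto simp: schur_def lookup_sum lookup_single when_def intro!: sum.cong)
  also have "\<dots> = int (card {T\<in>ssyt N la. tab_monomial la T = \<alpha>})"
    by (rule sum_indicator_card[OF finite_ssyt])
  finally show ?thesis .
qed

lemma tm_eq_iff: "tab_monomial la T = \<alpha> \<longleftrightarrow> (\<forall>i. cnt (pad la) T i = Poly_Mapping.lookup \<alpha> i)"
  by (metis lookup_tm poly_mapping_eqI)

lemma tm_add_eq_iff: "tab_monomial la T + \<gamma> = \<alpha> \<longleftrightarrow>
    (\<forall>i. cnt (pad la) T i + Poly_Mapping.lookup \<gamma> i = Poly_Mapping.lookup \<alpha> i)"
  by (metis lookup_add lookup_tm poly_mapping_eqI)

lemma card_tm_add:
  assumes b: "bnd N (Poly_Mapping.lookup \<alpha>)"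
  shows "card {T\<in>ssyt N mu. tab_monomial mu T + \<gamma> = \<alpha>} =
    (if \<forall>i. Poly_Mapping.lookup \<gamma> i \<le> Poly_Mapping.lookup \<alpha> i
     then Kf N (pad mu) (\<lambda>i. Poly_Mapping.lookup \<alpha> i - Poly_Mapping.lookup \<gamma> i) else 0)"
proof (cases "\<forall>i. Poly_Mapping.lookup \<gamma> i \<le> Poly_Mapping.lookup \<alpha> i")
  case True
  have "{T\<in>ssyt N mu. tab_monomial mu T + \<gamma> = \<alpha>} =
      {T\<in>ssytf N (pad mu). \<forall>v<N. cnt (pad mu) T v = Poly_Mapping.lookup \<alpha> v - Poly_Mapping.lookup \<gamma> v}"
  proof (rule Collect_cong)
    fix T
    show "(T \<in> ssyt N mu \<and> tab_monomial mu T + \<gamma> = \<alpha>) =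
      (T \<in> ssytf N (pad mu) \<and> (\<forall>v<N. cnt (pad mu) T v = Poly_Mapping.lookup \<alpha> v - Poly_Mapping.lookup \<gamma> v))"
    proof (cases "T \<in> ssytf N (pad mu)")
      case TT: True
      have "(\<forall>i. cnt (pad mu) T i + Poly_Mapping.lookup \<gamma> i = Poly_Mapping.lookup \<alpha> i) \<longleftrightarrow>
            (\<forall>v<N. cnt (pad mu) T v = Poly_Mapping.lookup \<alpha> v - Poly_Mapping.lookup \<gamma> v)"
      proof
        assume "\<forall>i. cnt (pad mu) T i + Poly_Mapping.lookup \<gamma> i = Poly_Mapping.lookup \<alpha> i"
        then show "\<forall>v<N. cnt (pad mu) T v = Poly_Mapping.lookup \<alpha> v - Poly_Mapping.lookup \<gamma> v"
          by (metis add_diff_cancel_right')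
      next
        assume a: "\<forall>v<N. cnt (pad mu) T v = Poly_Mapping.lookup \<alpha> v - Poly_Mapping.lookup \<gamma> v"
        show "\<forall>i. cnt (pad mu) T i + Poly_Mapping.lookup \<gamma> i = Poly_Mapping.lookup \<alpha> i"
        proof
          fix i show "cnt (pad mu) T i + Poly_Mapping.lookup \<gamma> i = Poly_Mapping.lookup \<alpha> i"
          proof (cases "i < N")
            case True then show ?thesis using a \<open>\<forall>i. _ \<le> _\<close> by (metis le_add_diff_inverse2)
          next
            case False
            then have "Poly_Mapping.lookup \<alpha> i = 0" using b by (simp add: bnd_def)
            moreover have "Poly_Mapping.lookup \<gamma> i = 0" using calculation True by (metis le_zero_eq)
            moreover have "cnt (pad mu) T i = 0" using cnt_big[OF TT] False by simp
            ultimately show ?thesis by simp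
          qed
        qed
      qed
      then show ?thesis using TT by (simp add: ssyt_pad tm_add_eq_iff)
    next
      case False then show ?thesis by (simp add: ssyt_pad)
    qed
  qed
  then show ?thesis using True by (simp add: Kf_def)
next
  case False
  then obtain i where i: "Poly_Mapping.lookup \<alpha> i < Poly_Mapping.lookup \<gamma> i" by (meson not_le)
  have E: "{T\<in>ssyt N mu. tab_monomial mu T + \<gamma> = \<alpha>} = {}"
  proof -
    have F: "False" if "T \<in> ssyt N mu" "tab_monomial mu T + \<gamma> = \<alpha>" for T
    proof -
      from that have "cnt (pad mu) T i + Poly_Mapping.lookup \<gamma> i = Poly_Mapping.lookup \<alpha> i"
        using tm_add_eq_iff by blast
      then show False using i by simp
    qed
    then show ?thesis by blast
  qed
  show ?thesis using False by (simp only: E card.empty if_False)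
qed

lemma lookup_schur_hcomp:
  "Poly_Mapping.lookup (schur N mu * hcomp N k) \<alpha> =
     (\<Sum>\<gamma>\<in>H N k. int (card {T\<in>ssyt N mu. tab_monomial mu T + \<gamma> = \<alpha>}))"
proof -
  have "schur N mu * hcomp N k = (\<Sum>T\<in>ssyt N mu. \<Sum>\<gamma>\<in>H N k. Poly_Mapping.single (tab_monomial mu T + \<gamma>) 1)"
    by (simp add: schur_def hcomp_sum sum_product mult_single)
  then have "Poly_Mapping.lookup (schur N mu * hcomp N k) \<alpha> =
      (\<Sum>T\<in>ssyt N mu. \<Sum>\<gamma>\<in>H N k. (1::int) when tab_monomial mu T + \<gamma> = \<alpha>)"
    by (auto simp: lookup_sum lookup_single when_def intro!: sum.cong)
  also have "\<dots> = (\<Sum>\<gamma>\<in>H N k. \<Sum>T\<in>ssyt N mu. (1::int) when tab_monomial mu T + \<gamma> = \<alpha>)"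
    by (rule sum.swap)
  also have "\<dots> = (\<Sum>\<gamma>\<in>H N k. int (card {T\<in>ssyt N mu. tab_monomial mu T + \<gamma> = \<alpha>}))"
    by (intro sum.cong refl sum_indicator_card finite_ssyt)
  finally show ?thesis .
qed

lemma sum_H_G:
  assumes b: "bnd N (Poly_Mapping.lookup \<alpha>)"
  shows "(\<Sum>\<gamma>\<in>H N k. int (card {T\<in>ssyt N mu. tab_monomial mu T + \<gamma> = \<alpha>})) =
    int (\<Sum>g\<in>G N (Poly_Mapping.lookup \<alpha>) k. Kf N (pad mu) (\<lambda>i. Poly_Mapping.lookup \<alpha> i - g i))"
proof -
  let ?a = "Poly_Mapping.lookup \<alpha>"
  let ?S = "{\<gamma>\<in>H N k. \<forall>i. Poly_Mapping.lookup \<gamma> i \<le> ?a i}"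
  have "(\<Sum>\<gamma>\<in>H N k. int (card {T\<in>ssyt N mu. tab_monomial mu T + \<gamma> = \<alpha>}))
      = (\<Sum>\<gamma>\<in>H N k. if \<forall>i. Poly_Mapping.lookup \<gamma> i \<le> ?a i
           then int (Kf N (pad mu) (\<lambda>i. ?a i - Poly_Mapping.lookup \<gamma> i)) else 0)"
    by (intro sum.cong refl) (simp add: card_tm_add[OF b])
  also have "\<dots> = (\<Sum>\<gamma>\<in>?S. int (Kf N (pad mu) (\<lambda>i. ?a i - Poly_Mapping.lookup \<gamma> i)))"
    by (simp add: sum.inter_filter[OF finite_H])
  also have "\<dots> = (\<Sum>g\<in>G N ?a k. int (Kf N (pad mu) (\<lambda>i. ?a i - g i)))"
  proof -
    have w1: "Abs_poly_mapping (Poly_Mapping.lookup \<gamma>) = \<gamma>" for \<gamma> :: "nat \<Rightarrow>\<^sub>0 nat" by (rule lookup_inverse)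
    have w2: "Poly_Mapping.lookup \<gamma> \<in> G N ?a k" if "\<gamma> \<in> ?S" for \<gamma> using that by (auto simp: H_iff G_def bnd_def)
    have w34: "Poly_Mapping.lookup (Abs_poly_mapping g) = g \<and> Abs_poly_mapping g \<in> ?S" if g: "g \<in> G N ?a k" for g
    proof -
      have gz: "\<forall>i\<ge>N. g i = 0" using g by (simp add: G_def)
      have "{x. g x \<noteq> 0} \<subseteq> {..<N}"
      proof
        fix x assume "x \<in> {x. g x \<noteq> 0}" then show "x \<in> {..<N}" using gz by (metis lessThan_iff mem_Collect_eq not_le)
      qed
      then have fin: "finite {x. g x \<noteq> 0}" using finite_subset by blast
      then have l: "Poly_Mapping.lookup (Abs_poly_mapping g) = g" by simp
      have "g i \<le> ?a i" for i
      proof (cases "i < N")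
        case True then show ?thesis using g by (simp add: G_def)
      next
        case False then show ?thesis using gz by simp
      qed
      then have "\<forall>i. g i \<le> ?a i" by blast
      then show ?thesis using g l by (auto simp: H_iff G_def bnd_def)
    qed
    have w5: "\<forall>i. g i \<le> ?a i" if g: "g \<in> G N ?a k" for g
    proof
      fix i show "g i \<le> ?a i"
      proof (cases "i < N")
        case True then show ?thesis using g by (simp add: G_def)
      next
        case False then show ?thesis using g by (simp add: G_def)
      qed
    qed
    show ?thesis
      apply (rule sum.reindex_bij_witness[where j=Poly_Mapping.lookup and i=Abs_poly_mapping])
          apply (rule w1)
         apply (erule w2)
        apply (erule w34[THEN conjunct1])
       apply (erule w34[THEN conjunct2])
      apply (rule refl)
      done
  qed
  finally show ?thesis by simp
qed

definition HSL :: "nat list \<Rightarrow> nat \<Rightarrow> nat list set" where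
  "HSL mu k = {la. is_partition la \<and> hsf (pad la) (pad mu) \<and> sum_list la = sum_list mu + k}"

lemma pad_HSL:
  assumes mu: "is_partition mu"
  shows "pad ` HSL mu k = HS (Suc (length mu)) (pad mu) k" and "inj_on pad (HSL mu k)"
proof -
  let ?L = "length mu"
  have bmu: "bnd ?L (pad mu)" by (rule bnd_pad) simp
  show "inj_on pad (HSL mu k)" unfolding inj_on_def HSL_def using pad_inj by blast
  show "pad ` HSL mu k = HS (Suc ?L) (pad mu) k"
  proof
    show "pad ` HSL mu k \<subseteq> HS (Suc ?L) (pad mu) k"
    proof safe
      fix la assume la: "la \<in> HSL mu k"
      then have p: "is_partition la" and h: "hsf (pad la) (pad mu)" and s: "sum_list la = sum_list mu + k"
        by (auto simp: HSL_def)
      have "bnd (Suc ?L) (pad la)" using hsf_bnd_Suc[OF h bmu] .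
      then have "length la \<le> Suc ?L" using pad_pos[OF p] by (metis bnd_def not_le less_irrefl)
      then show "pad la \<in> HS (Suc ?L) (pad mu) k"
        using h s sum_list_pad[of la "Suc ?L"] sum_list_pad[of mu "Suc ?L"] by (simp add: HS_def)
    qed
    show "HS (Suc ?L) (pad mu) k \<subseteq> pad ` HSL mu k"
    proof
      fix f assume f: "f \<in> HS (Suc ?L) (pad mu) k"
      have "pfun (Suc ?L) f" using pfun_HS[OF f bmu] .
      then obtain la where la: "is_partition la" "length la \<le> Suc ?L" "pad la = f" using pad_surj by blast
      have "la \<in> HSL mu k" using f la sum_list_pad[of la "Suc ?L"] sum_list_pad[of mu "Suc ?L"]
        by (auto simp: HS_def HSL_def)
      then show "f \<in> pad ` HSL mu k" using la by blast
    qed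
  qed
qed

lemma finite_HSL: "is_partition mu \<Longrightarrow> finite (HSL mu k)"
  using pad_HSL[of mu k] finite_HS[OF bnd_pad[of mu "length mu"]] by (metis finite_imageD order_refl)

lemma lookup_schur:
  "Poly_Mapping.lookup (schur N la) \<alpha> = (if bnd N (Poly_Mapping.lookup \<alpha>) then int (Kf N (pad la) (Poly_Mapping.lookup \<alpha>)) else 0)"
proof (cases "bnd N (Poly_Mapping.lookup \<alpha>)")
  case True
  have "{T\<in>ssyt N la. tab_monomial la T = \<alpha>} = {T\<in>ssytf N (pad la). \<forall>v<N. cnt (pad la) T v = Poly_Mapping.lookup \<alpha> v}"
  proof (rule Collect_cong)
    fix T
    show "(T \<in> ssyt N la \<and> tab_monomial la T = \<alpha>) =
      (T \<in> ssytf N (pad la) \<and> (\<forall>v<N. cnt (pad la) T v = Poly_Mapping.lookup \<alpha> v))"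
    proof (cases "T \<in> ssytf N (pad la)")
      case TT: True
      have "(\<forall>i. cnt (pad la) T i = Poly_Mapping.lookup \<alpha> i) \<longleftrightarrow> (\<forall>v<N. cnt (pad la) T v = Poly_Mapping.lookup \<alpha> v)"
      proof
        assume a: "\<forall>v<N. cnt (pad la) T v = Poly_Mapping.lookup \<alpha> v"
        show "\<forall>i. cnt (pad la) T i = Poly_Mapping.lookup \<alpha> i"
        proof
          fix i show "cnt (pad la) T i = Poly_Mapping.lookup \<alpha> i"
          proof (cases "i < N")
            case True then show ?thesis using a by simp
          next
            case False
            then have "Poly_Mapping.lookup \<alpha> i = 0" using \<open>bnd N _\<close> by (simp add: bnd_def)
            then show ?thesis using cnt_big[OF TT] False by simp
          qed
        qed
      qed simp
      then show ?thesis using TT by (simp add: ssyt_pad tm_eq_iff)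
    next
      case False then show ?thesis by (simp add: ssyt_pad)
    qed
  qed
  then show ?thesis using True by (simp add: lookup_schur_card Kf_def)
next
  case False
  then obtain i where i: "N \<le> i" "Poly_Mapping.lookup \<alpha> i \<noteq> 0" by (auto simp: bnd_def)
  have E: "{T\<in>ssyt N la. tab_monomial la T = \<alpha>} = {}"
  proof -
    have F: "False" if "T \<in> ssyt N la" "tab_monomial la T = \<alpha>" for T
    proof -
      from that have "cnt (pad la) T i = Poly_Mapping.lookup \<alpha> i" using tm_eq_iff by blast
      moreover have "cnt (pad la) T i = 0" using cnt_big[of T N "pad la" i] that(1) i(1) by (simp add: ssyt_pad)
      ultimately show False using i(2) by simp
    qed
    then show ?thesis by blast
  qed
  show ?thesis using False by (simp add: lookup_schur_card E)
qed

lemma pieri: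
  assumes mu: "is_partition mu"
  shows "schur N mu * hcomp N k = (\<Sum>la\<in>HSL mu k. schur N la)"
proof (rule poly_mapping_eqI)
  fix \<alpha> :: "nat \<Rightarrow>\<^sub>0 nat"
  let ?a = "Poly_Mapping.lookup \<alpha>"
  let ?L = "length mu"
  show "Poly_Mapping.lookup (schur N mu * hcomp N k) \<alpha> = Poly_Mapping.lookup (\<Sum>la\<in>HSL mu k. schur N la) \<alpha>"
  proof (cases "bnd N ?a")
    case True
    have "Poly_Mapping.lookup (schur N mu * hcomp N k) \<alpha> = int (\<Sum>g\<in>G N ?a k. Kf N (pad mu) (\<lambda>i. ?a i - g i))"
      using lookup_schur_hcomp sum_H_G[OF True] by simp
    also have "\<dots> = int (\<Sum>f\<in>HS (Suc ?L) (pad mu) k. Kf N f ?a)"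
      using pieri_f[OF pfun_pad[OF mu order_refl]] by simp
    also have "\<dots> = int (\<Sum>la\<in>HSL mu k. Kf N (pad la) ?a)"
      using sum.reindex[OF pad_HSL(2)[OF mu], of "\<lambda>f. Kf N f ?a"] pad_HSL(1)[OF mu] by simp
    also have "\<dots> = Poly_Mapping.lookup (\<Sum>la\<in>HSL mu k. schur N la) \<alpha>"
      using True by (simp add: lookup_sum lookup_schur)
    finally show ?thesis .
  next
    case False
    then obtain i where i: "N \<le> i" "?a i \<noteq> 0" by (auto simp: bnd_def)
    have "card {T\<in>ssyt N mu. tab_monomial mu T + \<gamma> = \<alpha>} = 0" if g: "\<gamma> \<in> H N k" for \<gamma>
    proof -
      have "Poly_Mapping.lookup \<gamma> i = 0" using g i by (simp add: H_iff bnd_def)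
      then have E: "{T\<in>ssyt N mu. tab_monomial mu T + \<gamma> = \<alpha>} = {}"
      proof -
        have F: "False" if "T \<in> ssyt N mu" "tab_monomial mu T + \<gamma> = \<alpha>" for T
        proof -
          from that have "cnt (pad mu) T i + Poly_Mapping.lookup \<gamma> i = ?a i" using tm_add_eq_iff by blast
          moreover have "cnt (pad mu) T i = 0" using cnt_big[of T N "pad mu" i] that(1) i(1) by (simp add: ssyt_pad)
          ultimately show False using i(2) \<open>Poly_Mapping.lookup \<gamma> i = 0\<close> by simp
        qed
        then show ?thesis by blast
      qed
      show ?thesis by (simp add: E)
    qed
    then have "Poly_Mapping.lookup (schur N mu * hcomp N k) \<alpha> = 0"
      by (simp add: lookup_schur_hcomp)
    also have "\<dots> = Poly_Mapping.lookup (\<Sum>la\<in>HSL mu k. schur N la) \<alpha>"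
      using False by (simp add: lookup_sum lookup_schur)
    finally show ?thesis .
  qed
qed


lemma card_cells_rows:
  assumes "bnd L f"
  shows "card {c\<in>cellsf f. fst c \<le> r} = sum f {..r}"
proof -
  have "{c\<in>cellsf f. fst c \<le> r} = Sigma {..r} (\<lambda>i. {..<f i})" by (auto simp: cellsf_def)
  then show ?thesis by (simp add: card_SigmaI)
qed

lemma card_le_val:
  assumes "bnd L f"
  shows "card {c\<in>cellsf f. T c \<le> r} = (\<Sum>v\<le>r. cnt f T v)"
proof (induction r)
  case 0 then show ?case by (simp add: cnt_def)
next
  case (Suc r)
  have fin: "finite (cellsf f)" using finite_cellsf[OF assms] .
  have "{c\<in>cellsf f. T c \<le> Suc r} = {c\<in>cellsf f. T c \<le> r} \<union> {c\<in>cellsf f. T c = Suc r}" by auto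
  moreover have "{c\<in>cellsf f. T c \<le> r} \<inter> {c\<in>cellsf f. T c = Suc r} = {}" by auto
  ultimately have "card {c\<in>cellsf f. T c \<le> Suc r} = card {c\<in>cellsf f. T c \<le> r} + card {c\<in>cellsf f. T c = Suc r}"
    using fin by (simp add: card_Un_disjoint)
  then show ?case using Suc.IH by (simp add: cnt_def)
qed

lemma le_val_sub_rows:
  assumes "T \<in> ssytf N f" "pfun L f"
  shows "{c\<in>cellsf f. T c \<le> r} \<subseteq> {c\<in>cellsf f. fst c \<le> r}"
proof
  fix c assume c: "c \<in> {c\<in>cellsf f. T c \<le> r}"
  obtain i j where cij: "c = (i, j)" by (cases c)
  have "i \<le> T (i, j)" using col_ge[OF assms(1)] assms(2) c cij by (auto simp: pfun_def)
  then show "c \<in> {c\<in>cellsf f. fst c \<le> r}" using c cij by auto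
qed

lemma dom_of_tab:
  assumes "T \<in> ssytf N f" "pfun L f" "\<forall>v. cnt f T v = g v"
  shows "sum g {..r} \<le> sum f {..r}"
proof -
  have bf: "bnd L f" using assms(2) by (simp add: pfun_def)
  have "sum g {..r} = card {c\<in>cellsf f. T c \<le> r}" using card_le_val[OF bf] assms(3) by simp
  also have "\<dots> \<le> card {c\<in>cellsf f. fst c \<le> r}"
    by (rule card_mono) (use finite_cellsf[OF bf] le_val_sub_rows[OF assms(1,2)] in auto)
  also have "\<dots> = sum f {..r}" by (rule card_cells_rows[OF bf])
  finally show ?thesis .
qed

lemma cnt_all:
  assumes "T \<in> ssytf N f" "bnd N g" "\<forall>v<N. cnt f T v = g v"
  shows "\<forall>v. cnt f T v = g v"
proof
  fix v show "cnt f T v = g v"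
  proof (cases "v < N")
    case True then show ?thesis using assms(3) by simp
  next
    case False then show ?thesis using cnt_big[OF assms(1)] assms(2) by (simp add: bnd_def)
  qed
qed

definition T0 :: "(nat \<Rightarrow> nat) \<Rightarrow> nat \<times> nat \<Rightarrow> nat" where
  "T0 f c = (if c \<in> cellsf f then fst c else 0)"

lemma Kf_self:
  assumes "pfun N f"
  shows "Kf N f f = 1"
proof -
  have bf: "bnd N f" using assms by (simp add: pfun_def)
  have anti: "f (Suc i) \<le> f i" for i using assms by (simp add: pfun_def)
  have T0in: "T0 f \<in> ssytf N f"
  proof -
    have "\<forall>c\<in>cellsf f. T0 f c < N"
    proof
      fix c assume c: "c \<in> cellsf f"
      obtain i j where cij: "c = (i, j)" by (cases c)
      have "0 < f i" using c cij by (simp add: cellsf_def)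
      then have "i < N" using bf by (metis bnd_def not_le less_irrefl)
      then show "T0 f c < N" using c cij by (simp add: T0_def)
    qed
    moreover have "\<forall>i j. (Suc i, j) \<in> cellsf f \<longrightarrow> T0 f (i, j) < T0 f (Suc i, j)"
    proof (intro allI impI)
      fix i j assume c: "(Suc i, j) \<in> cellsf f"
      then have "j < f (Suc i)" by (simp add: cellsf_def)
      then have "j < f i" using anti[of i] by linarith
      then have "(i, j) \<in> cellsf f" by (simp add: cellsf_def)
      then show "T0 f (i, j) < T0 f (Suc i, j)" using c by (simp add: T0_def)
    qed
    moreover have "\<forall>i j. (i, Suc j) \<in> cellsf f \<longrightarrow> T0 f (i, j) \<le> T0 f (i, Suc j)"
      by (auto simp: T0_def cellsf_def)
    moreover have "\<forall>c. c \<notin> cellsf f \<longrightarrow> T0 f c = 0" by (simp add: T0_def)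
    ultimately show ?thesis unfolding ssytf_def by blast
  qed
  have cnt0: "cnt f (T0 f) v = f v" for v
  proof -
    have "{c\<in>cellsf f. T0 f c = v} = {v} \<times> {..<f v}"
    proof (rule set_eqI)
      fix c :: "nat \<times> nat"
      obtain i j where cij: "c = (i, j)" by (cases c)
      show "c \<in> {c\<in>cellsf f. T0 f c = v} \<longleftrightarrow> c \<in> {v} \<times> {..<f v}"
        unfolding cij by (auto simp: T0_def cellsf_def)
    qed
    then show ?thesis by (simp add: cnt_def)
  qed
  have uniq: "T = T0 f" if T: "T \<in> ssytf N f" "\<forall>v<N. cnt f T v = f v" for T
  proof
    fix c
    show "T c = T0 f c"
    proof (cases "c \<in> cellsf f")
      case False then show ?thesis using T(1) by (simp add: ssytf_out T0_def)
    next
      case True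
      obtain r j where cij: "c = (r, j)" by (cases c)
      have call: "\<forall>v. cnt f T v = f v" using cnt_all[OF T(1) bf T(2)] .
      have fin: "finite {c\<in>cellsf f. fst c \<le> r}" using finite_cellsf[OF bf] by simp
      have "card {c\<in>cellsf f. T c \<le> r} = sum f {..r}" using card_le_val[OF bf] call by simp
      also have "\<dots> = card {c\<in>cellsf f. fst c \<le> r}" using card_cells_rows[OF bf] by simp
      finally have "{c\<in>cellsf f. T c \<le> r} = {c\<in>cellsf f. fst c \<le> r}"
        using card_subset_eq[OF fin le_val_sub_rows[OF T(1) assms]] by simp
      note eqs = this
      have "c \<in> {c\<in>cellsf f. fst c \<le> r}" using True cij by simp
      then have "c \<in> {c\<in>cellsf f. T c \<le> r}" by (simp only: eqs)
      then have "T c \<le> r" by simp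
      moreover have "r \<le> T c"
      proof -
        have an: "\<forall>i. f (Suc i) \<le> f i" using anti by blast
        show ?thesis using col_ge[OF T(1) an, of r j] True cij by simp
      qed
      ultimately show ?thesis using True cij by (simp add: T0_def)
    qed
  qed
  have "{T\<in>ssytf N f. \<forall>v<N. cnt f T v = f v} = {T0 f}"
  proof
    show "{T\<in>ssytf N f. \<forall>v<N. cnt f T v = f v} \<subseteq> {T0 f}" using uniq by blast
    show "{T0 f} \<subseteq> {T\<in>ssytf N f. \<forall>v<N. cnt f T v = f v}" using T0in cnt0 by blast
  qed
  then show ?thesis by (simp add: Kf_def)
qed

lemma Kf_dom:
  assumes "Kf N f g \<noteq> 0" "pfun L f" "bnd N g"
  shows "sum g {..r} \<le> sum f {..r}"
proof -
  have "{T\<in>ssytf N f. \<forall>v<N. cnt f T v = g v} \<noteq> {}" using assms(1) unfolding Kf_def by (metis card.empty)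
  then obtain T where T: "T \<in> ssytf N f" "\<forall>v<N. cnt f T v = g v" by blast
  show ?thesis using dom_of_tab[OF T(1) assms(2) cnt_all[OF T(1) assms(3) T(2)]] .
qed

definition Phi :: "nat \<Rightarrow> (nat \<Rightarrow> nat) \<Rightarrow> nat" where
  "Phi N f = (\<Sum>r<N. sum f {..r})"

lemma Phi_mono: "\<forall>r. sum g {..r} \<le> sum f {..r} \<Longrightarrow> Phi N g \<le> Phi N f"
  unfolding Phi_def by (rule sum_mono) auto

lemma Phi_strict:
  assumes "\<forall>r. sum g {..r} \<le> sum f {..r}" "bnd N f" "bnd N g" "f \<noteq> g"
  shows "Phi N g < Phi N f"
proof -
  have "\<exists>i. f i \<noteq> g i" using assms(4) by auto
  define i0 where "i0 = (LEAST i. f i \<noteq> g i)"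
  have ne: "f i0 \<noteq> g i0" unfolding i0_def by (rule LeastI_ex) fact
  have eq: "i < i0 \<Longrightarrow> f i = g i" for i unfolding i0_def using not_less_Least by blast
  have i0N: "i0 < N" using ne assms(2,3) by (metis bnd_def not_le)
  have se: "sum f {..<i0} = sum g {..<i0}" by (rule sum.cong) (auto simp: eq)
  have "sum g {..i0} \<le> sum f {..i0}" using assms(1) by blast
  then have "g i0 \<le> f i0" using se by (simp add: lessThan_Suc_atMost[symmetric])
  then have "g i0 < f i0" using ne by simp
  then have strict: "sum g {..i0} < sum f {..i0}" using se by (simp add: lessThan_Suc_atMost[symmetric])
  have c1: "\<forall>x\<in>{..<N}. sum g {..x} \<le> sum f {..x}" using assms(1) by blast
  have c2: "\<exists>a\<in>{..<N}. sum g {..a} < sum f {..a}" using strict i0N by blast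
  show ?thesis unfolding Phi_def
    by (rule sum_strict_mono_ex1[OF finite_lessThan c1 c2])
qed


lemma sum_fun_apply: "(\<Sum>i\<in>A. F i) x = (\<Sum>i\<in>A. F i x)"
  by (induction A rule: infinite_finite_induct) auto

definition mmono :: "nat list \<Rightarrow> (nat \<Rightarrow>\<^sub>0 nat)" where
  "mmono la = Abs_poly_mapping (pad la)"

lemma lookup_mono: "Poly_Mapping.lookup (mmono la) = pad la"
proof -
  have "{i. pad la i \<noteq> 0} \<subseteq> {..<length la}" by (auto simp: pad_def split: if_splits)
  then have "finite {i. pad la i \<noteq> 0}" using finite_subset by blast
  then show ?thesis by (simp add: mmono_def)
qed

lemma basis_D: "la \<in> schur_basis N \<Longrightarrow> is_partition la \<and> length la \<le> N"
  by (simp add: schur_basis_def)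

lemma K_self: "la \<in> schur_basis N \<Longrightarrow> Poly_Mapping.lookup (schur N la) (mmono la) = 1"
proof -
  assume "la \<in> schur_basis N"
  then have p: "is_partition la" and l: "length la \<le> N" using basis_D by auto
  have b: "bnd N (pad la)" using bnd_pad[OF l] .
  have k: "Kf N (pad la) (pad la) = 1" using Kf_self[OF pfun_pad[OF p l]] .
  have "Poly_Mapping.lookup (schur N la) (mmono la) = (if bnd N (pad la) then int (Kf N (pad la) (pad la)) else 0)"
    using lookup_schur[of N la "mmono la"] by (simp only: lookup_mono)
  then show ?thesis using b k by simp
qed

lemma K_dom:
  assumes "la \<in> schur_basis N" "mu \<in> schur_basis N" "Poly_Mapping.lookup (schur N la) (mmono mu) \<noteq> 0"
  shows "\<forall>r. sum (pad mu) {..r} \<le> sum (pad la) {..r}"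
proof
  fix r
  have la: "is_partition la" "length la \<le> N" and mu: "is_partition mu" "length mu \<le> N"
    using basis_D assms(1,2) by auto
  have b: "bnd N (pad mu)" using bnd_pad mu(2) .
  have "Poly_Mapping.lookup (schur N la) (mmono mu) = (if bnd N (pad mu) then int (Kf N (pad la) (pad mu)) else 0)"
    using lookup_schur[of N la "mmono mu"] by (simp only: lookup_mono)
  then have "Kf N (pad la) (pad mu) \<noteq> 0" using assms(3) b by simp
  then show "sum (pad mu) {..r} \<le> sum (pad la) {..r}"
    using Kf_dom[OF _ pfun_pad[OF la] b] by blast
qed

lemma pad_neq: "la \<in> schur_basis N \<Longrightarrow> mu \<in> schur_basis N \<Longrightarrow> la \<noteq> mu \<Longrightarrow> pad la \<noteq> pad mu"
  using pad_inj basis_D by blast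


lemma lin_indep:
  assumes finS: "finite S" and sub: "S \<subseteq> schur_basis N \<times> schur_basis N"
    and zero: "\<forall>x. (\<Sum>p\<in>S. d p * tensor (schur N (fst p)) (schur N (snd p)) x) = (0::int)"
  shows "\<forall>p\<in>S. d p = 0"
proof (rule ccontr)
  assume "\<not> (\<forall>p\<in>S. d p = 0)"
  then have Zne: "{p\<in>S. d p \<noteq> 0} \<noteq> {}" by auto
  let ?Z = "{p\<in>S. d p \<noteq> 0}"
  let ?Psi = "\<lambda>p. Phi N (pad (fst p)) + Phi N (pad (snd p))"
  have finZ: "finite ?Z" using finS by simp
  have "Max (?Psi ` ?Z) \<in> ?Psi ` ?Z" using Max_in finZ Zne by blast
  then obtain p0 where p0: "p0 \<in> ?Z" "?Psi p0 = Max (?Psi ` ?Z)" by auto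
  have pmax: "?Psi p \<le> ?Psi p0" if "p \<in> ?Z" for p
  proof -
    have "?Psi p \<in> ?Psi ` ?Z" using that by (rule imageI)
    then have "?Psi p \<le> Max (?Psi ` ?Z)" using finZ by simp
    then show ?thesis using p0(2) by simp
  qed
  obtain la0 nu0 where p0e: "p0 = (la0, nu0)" by (cases p0)
  have "p0 \<in> S" using p0 by blast
  then have "(la0, nu0) \<in> schur_basis N \<times> schur_basis N" using sub p0e by blast
  then have la0: "la0 \<in> schur_basis N" and nu0: "nu0 \<in> schur_basis N" by auto
  let ?x = "(mmono la0, mmono nu0)"
  let ?t = "\<lambda>p. d p * tensor (schur N (fst p)) (schur N (snd p)) ?x"
  have t_eq: "?t p = d p * (Poly_Mapping.lookup (schur N (fst p)) (mmono la0) * Poly_Mapping.lookup (schur N (snd p)) (mmono nu0))" for p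
    by (simp add: tensor_def)
  have others: "?t p = 0" if p: "p \<in> S - {p0}" for p
  proof (cases "d p = 0")
    case True then show ?thesis by simp
  next
    case False
    then have pZ: "p \<in> ?Z" using p by simp
    obtain la nu where pe: "p = (la, nu)" by (cases p)
    have "p \<in> S" using p by blast
    then have "(la, nu) \<in> schur_basis N \<times> schur_basis N" using sub pe by blast
    then have la: "la \<in> schur_basis N" and nu: "nu \<in> schur_basis N" by auto
    show ?thesis
    proof (rule ccontr)
      assume "?t p \<noteq> 0"
      then have k1: "Poly_Mapping.lookup (schur N la) (mmono la0) \<noteq> 0" and k2: "Poly_Mapping.lookup (schur N nu) (mmono nu0) \<noteq> 0"
        using t_eq[of p] pe by (auto simp del: of_nat_eq_0_iff)
      have d1: "\<forall>r. sum (pad la0) {..r} \<le> sum (pad la) {..r}" using K_dom[OF la la0 k1] .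
      have d2: "\<forall>r. sum (pad nu0) {..r} \<le> sum (pad nu) {..r}" using K_dom[OF nu nu0 k2] .
      have b: "bnd N (pad la)" "bnd N (pad la0)" "bnd N (pad nu)" "bnd N (pad nu0)"
        using basis_D la la0 nu nu0 bnd_pad by blast+
      have m1: "Phi N (pad la0) \<le> Phi N (pad la)" using Phi_mono[OF d1] .
      have m2: "Phi N (pad nu0) \<le> Phi N (pad nu)" using Phi_mono[OF d2] .
      have "p \<noteq> p0" using p by blast
      then have "la \<noteq> la0 \<or> nu \<noteq> nu0" using pe p0e by blast
      then have "Phi N (pad la0) < Phi N (pad la) \<or> Phi N (pad nu0) < Phi N (pad nu)"
      proof
        assume "la \<noteq> la0"
        then have "pad la \<noteq> pad la0" using pad_neq la la0 by blast
        then show ?thesis using Phi_strict[OF d1 b(1) b(2)] by blast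
      next
        assume "nu \<noteq> nu0"
        then have "pad nu \<noteq> pad nu0" using pad_neq nu nu0 by blast
        then show ?thesis using Phi_strict[OF d2 b(3) b(4)] by blast
      qed
      then have "?Psi p0 < ?Psi p" using m1 m2 pe p0e by auto
      then show False using pmax[OF pZ] by simp
    qed
  qed
  have p0S: "p0 \<in> S" using p0 by simp
  have "0 = (\<Sum>p\<in>S. ?t p)" using zero by simp
  also have "\<dots> = ?t p0 + (\<Sum>p\<in>S - {p0}. ?t p)" using sum.remove[OF finS p0S] by simp
  also have "\<dots> = ?t p0"
  proof -
    have "(\<Sum>p\<in>S - {p0}. ?t p) = 0" by (rule sum.neutral) (use others in blast)
    then show ?thesis by simp
  qed
  also have "\<dots> = d p0" using t_eq[of p0] p0e K_self[OF la0] K_self[OF nu0] by simp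
  finally show False using p0 by simp
qed


lemma schur_term_apply: "schur_term N c p x = c p * tensor (schur N (fst p)) (schur N (snd p)) x"
  by (simp add: schur_term_def)

lemma expansion_sum:
  assumes "schur_expansion N F c" "finite S" "{p. c p \<noteq> 0} \<subseteq> S"
  shows "F x = (\<Sum>p\<in>S. c p * tensor (schur N (fst p)) (schur N (snd p)) x)"
proof -
  have Fe: "F = (\<Sum>p\<in>{p. c p \<noteq> 0}. schur_term N c p)" using assms(1) unfolding schur_expansion_def by blast
  have "F x = (\<Sum>p\<in>{p. c p \<noteq> 0}. schur_term N c p x)"
    by (subst Fe) (rule sum_fun_apply)
  also have "\<dots> = (\<Sum>p\<in>{p. c p \<noteq> 0}. c p * tensor (schur N (fst p)) (schur N (snd p)) x)"
    by (simp only: schur_term_apply)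
  also have "\<dots> = (\<Sum>p\<in>S. c p * tensor (schur N (fst p)) (schur N (snd p)) x)"
    by (rule sum.mono_neutral_left[OF assms(2,3)]) auto
  finally show ?thesis .
qed

lemma expansion_unique:
  assumes e1: "schur_expansion N F c1" and e2: "schur_expansion N F c2"
  shows "c1 = c2"
proof
  fix p
  let ?S = "{p. c1 p \<noteq> 0} \<union> {p. c2 p \<noteq> 0}"
  have f1: "finite {p. c1 p \<noteq> 0}" and f2: "finite {p. c2 p \<noteq> 0}"
    using e1 e2 unfolding schur_expansion_def by blast+
  have finS: "finite ?S" using f1 f2 by blast
  have b1: "\<forall>p. c1 p \<noteq> 0 \<longrightarrow> fst p \<in> schur_basis N \<and> snd p \<in> schur_basis N"
    using e1 unfolding schur_expansion_def by blast
  have b2: "\<forall>p. c2 p \<noteq> 0 \<longrightarrow> fst p \<in> schur_basis N \<and> snd p \<in> schur_basis N"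
    using e2 unfolding schur_expansion_def by blast
  have sub: "?S \<subseteq> schur_basis N \<times> schur_basis N"
  proof
    fix q assume "q \<in> ?S" then show "q \<in> schur_basis N \<times> schur_basis N" using b1 b2 by (cases q) auto
  qed
  have "\<forall>x. (\<Sum>q\<in>?S. (c1 q - c2 q) * tensor (schur N (fst q)) (schur N (snd q)) x) = 0"
  proof
    fix x
    have "(\<Sum>q\<in>?S. (c1 q - c2 q) * tensor (schur N (fst q)) (schur N (snd q)) x)
        = (\<Sum>q\<in>?S. c1 q * tensor (schur N (fst q)) (schur N (snd q)) x)
          - (\<Sum>q\<in>?S. c2 q * tensor (schur N (fst q)) (schur N (snd q)) x)"
      by (simp add: left_diff_distrib sum_subtractf)
    also have "\<dots> = F x - F x"
      using expansion_sum[OF e1 finS, of x] expansion_sum[OF e2 finS, of x] by simp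
    finally show "(\<Sum>q\<in>?S. (c1 q - c2 q) * tensor (schur N (fst q)) (schur N (snd q)) x) = 0" by simp
  qed
  then have z: "\<forall>q\<in>?S. c1 q - c2 q = 0" by (rule lin_indep[OF finS sub])
  show "c1 p = c2 p"
  proof (cases "p \<in> ?S")
    case True
    then have "c1 p - c2 p = 0" using z by blast
    then show ?thesis by simp
  next
    case False
    then have "c1 p = 0" "c2 p = 0" by blast+
    then show ?thesis by simp
  qed
qed


definition Acnt :: "nat \<Rightarrow> nat list \<Rightarrow> nat list \<Rightarrow> nat" where
  "Acnt d la nu = card {mu\<in>partitions_of d. hsf (pad la) (pad mu) \<and> hsf (pad nu) (pad mu)}"

lemma partitions_of_D: "la \<in> partitions_of n \<Longrightarrow> is_partition la \<and> sum_list la = n"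
  by (simp add: partitions_of_def)

lemma length_partitions: "la \<in> partitions_of n \<Longrightarrow> length la \<le> n"
  using length_le_sum_list partitions_of_D by fastforce

lemma finite_partitions: "finite (partitions_of n)"
proof -
  have "partitions_of n \<subseteq> {xs. set xs \<subseteq> {..n} \<and> length xs \<le> n}"
  proof
    fix xs assume xs: "xs \<in> partitions_of n"
    have "set xs \<subseteq> {..n}" using member_le_sum_list partitions_of_D[OF xs] by fastforce
    moreover have "length xs \<le> n" using xs by (rule length_partitions)
    ultimately show "xs \<in> {xs. set xs \<subseteq> {..n} \<and> length xs \<le> n}" by simp
  qed
  moreover have "finite {xs. set xs \<subseteq> {..n} \<and> length xs \<le> n}" by (rule finite_lists_length_le) simp
  ultimately show ?thesis using finite_subset by blast
qed

lemma hsf_length: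
  assumes "hsf f (pad mu)" "is_partition mu" "bnd L f"
  shows "length mu \<le> L"
proof (rule ccontr)
  assume "\<not> length mu \<le> L"
  then have "0 < pad mu L" using pad_pos[OF assms(2)] by simp
  moreover have "pad mu L \<le> f L" using assms(1) by (simp add: hsf_def)
  ultimately show False using assms(3) by (simp add: bnd_def)
qed

lemma A_box:
  assumes la: "la \<in> partitions_of n" and nu: "nu \<in> partitions_of m" and Lb: "n \<le> Lb" "m \<le> Lb"
  shows "Acnt d la nu = card {k\<in>box (pad la) (pad nu). sz Lb k = d}"
proof -
  let ?X = "{mu\<in>partitions_of d. hsf (pad la) (pad mu) \<and> hsf (pad nu) (pad mu)}"
  let ?Y = "{k\<in>box (pad la) (pad nu). sz Lb k = d}"
  have bla: "bnd Lb (pad la)" using length_partitions[OF la] Lb by (intro bnd_pad) simp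
  have inj: "inj_on pad ?X" unfolding inj_on_def partitions_of_def using pad_inj by blast
  have "pad ` ?X = ?Y"
  proof
    show "pad ` ?X \<subseteq> ?Y"
    proof safe
      fix mu assume mu: "mu \<in> partitions_of d" "hsf (pad la) (pad mu)" "hsf (pad nu) (pad mu)"
      show "pad mu \<in> box (pad la) (pad nu)" using mu by (simp add: box_def)
      have "length mu \<le> Lb" using hsf_length[OF mu(2) _ bla] partitions_of_D[OF mu(1)] by blast
      then show "sz Lb (pad mu) = d" using sum_list_pad partitions_of_D[OF mu(1)] by metis
    qed
    show "?Y \<subseteq> pad ` ?X"
    proof
      fix k assume k: "k \<in> ?Y"
      have "hsf (pad la) k" using k by (simp add: box_def)
      then have "pfun Lb k" using hsf_pfun bla by blast
      then obtain mu where mu: "is_partition mu" "length mu \<le> Lb" "pad mu = k" using pad_surj by blast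
      have "sum_list mu = d" using sum_list_pad[OF mu(2)] mu(3) k by simp
      then have "mu \<in> ?X" using mu k by (simp add: partitions_of_def box_def)
      then show "k \<in> pad ` ?X" using mu(3) by blast
    qed
  qed
  then show ?thesis unfolding Acnt_def using card_image[OF inj] by simp
qed

lemma sum_card_fibers:
  assumes "finite X" "finite D"
  shows "(\<Sum>d\<in>D. card {k\<in>X. h k = d}) = card {k\<in>X. h k \<in> D}"
  using assms(2)
proof (induction D rule: finite_induct)
  case empty then show ?case by simp
next
  case (insert d D)
  have "{k\<in>X. h k \<in> insert d D} = {k\<in>X. h k = d} \<union> {k\<in>X. h k \<in> D}" by auto
  moreover have "{k\<in>X. h k = d} \<inter> {k\<in>X. h k \<in> D} = {}" using insert.hyps by auto
  ultimately have "card {k\<in>X. h k \<in> insert d D} = card {k\<in>X. h k = d} + card {k\<in>X. h k \<in> D}"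
    using assms(1) by (simp add: card_Un_disjoint)
  then show ?case using insert by simp
qed

lemma sum_if_card:
  assumes "finite X" "finite D"
  shows "(\<Sum>d\<in>D. if P d then card {k\<in>X. h k = d} else 0) = card {k\<in>X. h k \<in> {d\<in>D. P d}}"
proof -
  have "(\<Sum>d\<in>D. if P d then card {k\<in>X. h k = d} else 0) = (\<Sum>d\<in>{d\<in>D. P d}. card {k\<in>X. h k = d})"
    using sum.inter_filter[OF assms(2), of "\<lambda>d. card {k\<in>X. h k = d}" P] by simp
  also have "\<dots> = card {k\<in>X. h k \<in> {d\<in>D. P d}}" by (rule sum_card_fibers[OF assms(1)]) (use assms(2) in simp)
  finally show ?thesis .
qed

lemma part_first_pad: "is_partition la \<Longrightarrow> part_first la = pad la 0"
  by (cases la) (auto simp: part_first_def pad_def)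

lemma arith1: "1 \<le> (M::nat) \<Longrightarrow> M \<le> n + m \<Longrightarrow> (M \<le> n + m - 2 * s) = (2 * s \<le> n + m - M)"
  by arith

lemma arith2: "1 \<le> (M::nat) \<Longrightarrow> M \<le> n + m \<Longrightarrow> (M \<le> n + m - 2 * s - 1) = (2 * s < n + m - M)"
  by arith

lemma arith3: "(s::nat) \<le> T - X \<Longrightarrow> (T - X < 2 * (T - (X + s))) = (2 * s < T - X)"
  by arith

lemma comb_identity:
  assumes la: "la \<in> partitions_of n" and nu: "nu \<in> partitions_of m" and n: "0 < n" and m: "0 < m"
  shows "(\<Sum>d\<in>{0..min m n}. if max (part_first la) (part_first nu) \<le> n + m - 2 * d then Acnt d la nu else 0)
       + (\<Sum>d\<in>{0..<min m n}. if max (part_first la) (part_first nu) \<le> n + m - 2 * d - 1 then Acnt d la nu else 0)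
       = (\<Sum>d\<in>{0..min m n}. Acnt d la nu)"
proof -
  let ?Lb = "max n m"
  let ?A = "pad la" and ?B = "pad nu"
  let ?X = "box ?A ?B"
  let ?M = "max (part_first la) (part_first nu)"
  let ?mn = "min m n"
  have pla: "is_partition la" "sum_list la = n" and pnu: "is_partition nu" "sum_list nu = m"
    using partitions_of_D la nu by auto
  have lla: "length la \<le> ?Lb" and lnu: "length nu \<le> ?Lb"
    using length_partitions[OF la] length_partitions[OF nu] by auto
  have bA: "bnd ?Lb ?A" and bB: "bnd ?Lb ?B" using bnd_pad lla lnu by auto
  have szA: "sz ?Lb ?A = n" and szB: "sz ?Lb ?B = m" using sum_list_pad lla lnu pla pnu by metis+
  have finX: "finite ?X" by (rule finite_box[OF bA])
  have M: "?M = max (?A 0) (?B 0)" using part_first_pad pla pnu by simp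
  have A0: "?A 0 \<le> n" using le_sz[of 0 ?Lb ?A] szA n by simp
  have B0: "?B 0 \<le> m" using le_sz[of 0 ?Lb ?B] szB m by simp
  have "la \<noteq> []" using pla n by auto
  then have "0 < ?A 0" using pad_pos[OF pla(1)] by simp
  then have M1: "1 \<le> ?M" using M by simp
  have Mle: "?M \<le> n + m" using M A0 B0 by simp
  let ?S = "n + m - ?M"
  have Aeq: "Acnt d la nu = card {k\<in>?X. sz ?Lb k = d}" for d using A_box[OF la nu] by simp
  have szk: "sz ?Lb k \<le> ?mn" if "k \<in> ?X" for k using sz_box_le2[OF that, of ?Lb] szA szB by simp
  have szS: "sz ?Lb k \<le> ?S" if "k \<in> ?X" for k using sz_box_le[OF that bA bB] szA szB M by simp
  have iot: "sz ?Lb (iota ?A ?B k) = ?S - sz ?Lb k" "iota ?A ?B k \<in> ?X" if "k \<in> ?X" for k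
    using sz_iota[OF that bA bB] iota_box[OF that] szA szB M by auto
  have s1: "(\<Sum>d\<in>{0..?mn}. if ?M \<le> n + m - 2 * d then Acnt d la nu else 0)
      = card {k\<in>?X. sz ?Lb k \<in> {d\<in>{0..?mn}. ?M \<le> n + m - 2 * d}}"
    unfolding Aeq by (rule sum_if_card[OF finX]) simp
  have s2: "(\<Sum>d\<in>{0..<?mn}. if ?M \<le> n + m - 2 * d - 1 then Acnt d la nu else 0)
      = card {k\<in>?X. sz ?Lb k \<in> {d\<in>{0..<?mn}. ?M \<le> n + m - 2 * d - 1}}"
    unfolding Aeq by (rule sum_if_card[OF finX]) simp
  have s0: "(\<Sum>d\<in>{0..?mn}. Acnt d la nu) = card {k\<in>?X. sz ?Lb k \<in> {0..?mn}}"
    unfolding Aeq by (rule sum_card_fibers[OF finX]) simp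
  have e1: "{k\<in>?X. sz ?Lb k \<in> {d\<in>{0..?mn}. ?M \<le> n + m - 2 * d}} = {k\<in>?X. 2 * sz ?Lb k \<le> ?S}"
  proof (rule Collect_cong)
    fix k show "(k \<in> ?X \<and> sz ?Lb k \<in> {d\<in>{0..?mn}. ?M \<le> n + m - 2 * d}) = (k \<in> ?X \<and> 2 * sz ?Lb k \<le> ?S)"
      using szk[of k] arith1[OF M1 Mle, of "sz ?Lb k"] by auto
  qed
  have e2: "{k\<in>?X. sz ?Lb k \<in> {d\<in>{0..<?mn}. ?M \<le> n + m - 2 * d - 1}} = {k\<in>?X. 2 * sz ?Lb k < ?S}"
  proof (rule Collect_cong)
    fix k
    have "sz ?Lb k < ?mn" if k: "k \<in> ?X" and lt: "2 * sz ?Lb k < ?S"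
    proof -
      have "sz ?Lb (iota ?A ?B k) \<le> ?mn" using szk[OF iot(2)[OF k]] .
      then show ?thesis using iot(1)[OF k] lt by linarith
    qed
    then show "(k \<in> ?X \<and> sz ?Lb k \<in> {d\<in>{0..<?mn}. ?M \<le> n + m - 2 * d - 1}) = (k \<in> ?X \<and> 2 * sz ?Lb k < ?S)"
      using arith2[OF M1 Mle, of "sz ?Lb k"] by auto
  qed
  have e2': "card {k\<in>?X. 2 * sz ?Lb k < ?S} = card {k\<in>?X. ?S < 2 * sz ?Lb k}"
  proof -
    have "card {k\<in>?X. ?S < 2 * sz ?Lb k} = card {k\<in>?X. ?S < 2 * (sz ?Lb ?A + sz ?Lb ?B - max (?A 0) (?B 0) - sz ?Lb k)}"
      by (rule box_card_sym[OF bA bB])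
    also have "\<dots> = card {k\<in>?X. 2 * sz ?Lb k < ?S}"
    proof (rule arg_cong[where f=card], rule Collect_cong)
      fix k show "(k \<in> ?X \<and> ?S < 2 * (sz ?Lb ?A + sz ?Lb ?B - max (?A 0) (?B 0) - sz ?Lb k)) = (k \<in> ?X \<and> 2 * sz ?Lb k < ?S)"
      proof (cases "k \<in> ?X")
        case True
        have "sz ?Lb k \<le> n + m - max (?A 0) (?B 0)" using szS[OF True] M by simp
        from arith3[OF this] show ?thesis using True szA szB M by simp
      qed simp
    qed
    finally show ?thesis by simp
  qed
  have e0: "{k\<in>?X. sz ?Lb k \<in> {0..?mn}} = ?X" using szk by auto
  have "card {k\<in>?X. 2 * sz ?Lb k \<le> ?S} + card {k\<in>?X. ?S < 2 * sz ?Lb k} = card ?X"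
  proof -
    have "{k\<in>?X. 2 * sz ?Lb k \<le> ?S} \<union> {k\<in>?X. ?S < 2 * sz ?Lb k} = ?X" by auto
    moreover have "{k\<in>?X. 2 * sz ?Lb k \<le> ?S} \<inter> {k\<in>?X. ?S < 2 * sz ?Lb k} = {}" by auto
    ultimately show ?thesis using finX card_Un_disjoint[of "{k\<in>?X. 2 * sz ?Lb k \<le> ?S}" "{k\<in>?X. ?S < 2 * sz ?Lb k}"]
      by simp
  qed
  then show ?thesis using s1 s2 s0 e1 e2 e2' e0 by simp
qed


lemma tensor_apply: "tensor f g x = Poly_Mapping.lookup f (fst x) * Poly_Mapping.lookup g (snd x)"
  by (cases x) (simp add: tensor_def)

lemma HSL_eq: "mu \<in> partitions_of d \<Longrightarrow> d \<le> n \<Longrightarrow> HSL mu (n - d) = {la\<in>partitions_of n. hsf (pad la) (pad mu)}"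
  by (auto simp: HSL_def partitions_of_def)

lemma lookup_pieri:
  assumes "mu \<in> partitions_of d" "d \<le> n"
  shows "Poly_Mapping.lookup (schur N mu * hcomp N (n - d)) a =
    (\<Sum>la\<in>partitions_of n. if hsf (pad la) (pad mu) then Poly_Mapping.lookup (schur N la) a else 0)"
proof -
  have p: "is_partition mu" using assms(1) partitions_of_D by blast
  have "Poly_Mapping.lookup (schur N mu * hcomp N (n - d)) a = (\<Sum>la\<in>HSL mu (n - d). Poly_Mapping.lookup (schur N la) a)"
    by (simp add: pieri[OF p] lookup_sum)
  also have "\<dots> = (\<Sum>la\<in>{la\<in>partitions_of n. hsf (pad la) (pad mu)}. Poly_Mapping.lookup (schur N la) a)"
    by (simp add: HSL_eq[OF assms])
  also have "\<dots> = (\<Sum>la\<in>partitions_of n. if hsf (pad la) (pad mu) then Poly_Mapping.lookup (schur N la) a else 0)"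
    by (rule sum.inter_filter[OF finite_partitions])
  finally show ?thesis .
qed

abbreviation tt :: "nat \<Rightarrow> nat list \<times> nat list \<Rightarrow> (nat \<Rightarrow>\<^sub>0 nat) \<times> (nat \<Rightarrow>\<^sub>0 nat) \<Rightarrow> int" where
  "tt N p x \<equiv> tensor (schur N (fst p)) (schur N (snd p)) x"

lemma SF_expand:
  assumes dn: "d \<le> n" and dm: "d \<le> m"
  shows "SF N n m d x = (\<Sum>p\<in>partitions_of n \<times> partitions_of m. int (Acnt d (fst p) (snd p)) * tt N p x)"
proof -
  let ?Pd = "partitions_of d" and ?Pn = "partitions_of n" and ?Pm = "partitions_of m"
  let ?s = "\<lambda>la a. Poly_Mapping.lookup (schur N la) a"
  obtain a b where x: "x = (a, b)" by (cases x)
  have "SF N n m d x = (\<Sum>mu\<in>?Pd. Poly_Mapping.lookup (schur N mu * hcomp N (n - d)) a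
                                 * Poly_Mapping.lookup (schur N mu * hcomp N (m - d)) b)"
    by (simp add: SF_def sum_fun_apply tensor_apply x)
  also have "\<dots> = (\<Sum>mu\<in>?Pd. (\<Sum>la\<in>?Pn. if hsf (pad la) (pad mu) then ?s la a else 0)
                         * (\<Sum>nu\<in>?Pm. if hsf (pad nu) (pad mu) then ?s nu b else 0))"
    by (intro sum.cong refl) (simp add: lookup_pieri dn dm)
  also have "\<dots> = (\<Sum>mu\<in>?Pd. \<Sum>la\<in>?Pn. \<Sum>nu\<in>?Pm.
       (if hsf (pad la) (pad mu) then ?s la a else 0) * (if hsf (pad nu) (pad mu) then ?s nu b else 0))"
    by (intro sum.cong refl) (simp add: sum_product)
  also have "\<dots> = (\<Sum>mu\<in>?Pd. \<Sum>la\<in>?Pn. \<Sum>nu\<in>?Pm.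
       (if hsf (pad la) (pad mu) \<and> hsf (pad nu) (pad mu) then 1 else 0) * (?s la a * ?s nu b))"
    by (intro sum.cong refl) simp
  also have "\<dots> = (\<Sum>la\<in>?Pn. \<Sum>mu\<in>?Pd. \<Sum>nu\<in>?Pm.
       (if hsf (pad la) (pad mu) \<and> hsf (pad nu) (pad mu) then 1 else 0) * (?s la a * ?s nu b))"
    by (rule sum.swap)
  also have "\<dots> = (\<Sum>la\<in>?Pn. \<Sum>nu\<in>?Pm. \<Sum>mu\<in>?Pd.
       (if hsf (pad la) (pad mu) \<and> hsf (pad nu) (pad mu) then 1 else 0) * (?s la a * ?s nu b))"
    by (intro sum.cong refl sum.swap)
  also have "\<dots> = (\<Sum>la\<in>?Pn. \<Sum>nu\<in>?Pm. int (Acnt d la nu) * (?s la a * ?s nu b))"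
  proof (intro sum.cong refl)
    fix la nu
    have "(\<Sum>mu\<in>?Pd. (if hsf (pad la) (pad mu) \<and> hsf (pad nu) (pad mu) then 1 else 0) * (?s la a * ?s nu b))
        = (\<Sum>mu\<in>?Pd. (if hsf (pad la) (pad mu) \<and> hsf (pad nu) (pad mu) then 1 else 0)) * (?s la a * ?s nu b)"
      by (simp add: sum_distrib_right)
    also have "(\<Sum>mu\<in>?Pd. (if hsf (pad la) (pad mu) \<and> hsf (pad nu) (pad mu) then 1 else 0)) = (int (Acnt d la nu))"
    proof -
      have "(\<Sum>mu\<in>?Pd. (if hsf (pad la) (pad mu) \<and> hsf (pad nu) (pad mu) then 1 else 0))
          = (\<Sum>mu\<in>?Pd. (1::int) when hsf (pad la) (pad mu) \<and> hsf (pad nu) (pad mu))"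
        by (simp add: when_def)
      also have "\<dots> = int (Acnt d la nu)"
        unfolding Acnt_def by (rule sum_indicator_card[OF finite_partitions])
      finally show ?thesis .
    qed
    finally show "(\<Sum>mu\<in>?Pd. (if hsf (pad la) (pad mu) \<and> hsf (pad nu) (pad mu) then 1 else 0) * (?s la a * ?s nu b))
        = int (Acnt d la nu) * (?s la a * ?s nu b)" .
  qed
  also have "\<dots> = (\<Sum>p\<in>?Pn \<times> ?Pm. int (Acnt d (fst p) (snd p)) * (?s (fst p) a * ?s (snd p) b))"
    by (subst sum.cartesian_product) (simp add: case_prod_beta)
  also have "\<dots> = (\<Sum>p\<in>?Pn \<times> ?Pm. int (Acnt d (fst p) (snd p)) * tt N p x)"
    by (simp add: tensor_apply x)
  finally show ?thesis .
qed

definition cd :: "nat \<Rightarrow> nat \<Rightarrow> nat \<Rightarrow> nat list \<times> nat list \<Rightarrow> int" where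
  "cd n m d p = (if p \<in> partitions_of n \<times> partitions_of m then int (Acnt d (fst p) (snd p)) else 0)"

lemma SF_expansion:
  assumes "d \<le> n" "d \<le> m" "max n m \<le> N"
  shows "schur_expansion N (SF N n m d) (cd n m d)"
proof -
  let ?PP = "partitions_of n \<times> partitions_of m"
  have sub: "{p. cd n m d p \<noteq> 0} \<subseteq> ?PP" by (auto simp: cd_def split: if_splits)
  have finPP: "finite ?PP" using finite_partitions by simp
  have fin: "finite {p. cd n m d p \<noteq> 0}" using finite_subset[OF sub finPP] .
  have basis: "\<forall>p. cd n m d p \<noteq> 0 \<longrightarrow> fst p \<in> schur_basis N \<and> snd p \<in> schur_basis N"
  proof (intro allI impI)
    fix p assume "cd n m d p \<noteq> 0"
    then have "p \<in> ?PP" using sub by blast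
    then have "fst p \<in> partitions_of n" "snd p \<in> partitions_of m" by auto
    then show "fst p \<in> schur_basis N \<and> snd p \<in> schur_basis N"
      using length_partitions partitions_of_D assms(3) by (fastforce simp: schur_basis_def)
  qed
  have eq: "SF N n m d = (\<Sum>p\<in>{p. cd n m d p \<noteq> 0}. schur_term N (cd n m d) p)"
  proof
    fix x
    have "(\<Sum>p\<in>{p. cd n m d p \<noteq> 0}. schur_term N (cd n m d) p) x
        = (\<Sum>p\<in>{p. cd n m d p \<noteq> 0}. cd n m d p * tt N p x)"
      by (simp add: sum_fun_apply schur_term_apply)
    also have "\<dots> = (\<Sum>p\<in>?PP. cd n m d p * tt N p x)"
      by (rule sum.mono_neutral_left[OF finPP sub]) auto
    also have "\<dots> = (\<Sum>p\<in>?PP. int (Acnt d (fst p) (snd p)) * tt N p x)"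
      by (rule sum.cong) (auto simp: cd_def)
    also have "\<dots> = SF N n m d x" using SF_expand[OF assms(1,2)] by simp
    finally show "SF N n m d x = (\<Sum>p\<in>{p. cd n m d p \<noteq> 0}. schur_term N (cd n m d) p) x" by simp
  qed
  show ?thesis unfolding schur_expansion_def using fin basis eq by blast
qed

lemma trunc_apply:
  assumes "d \<le> n" "d \<le> m" "max n m \<le> N"
  shows "truncate N L (SF N n m d) x =
    (\<Sum>p\<in>partitions_of n \<times> partitions_of m.
        if max (part_first (fst p)) (part_first (snd p)) \<le> L then int (Acnt d (fst p) (snd p)) * tt N p x else 0)"
proof -
  let ?PP = "partitions_of n \<times> partitions_of m"
  let ?c = "cd n m d"
  have finPP: "finite ?PP" using finite_partitions by simp
  have the: "(THE c. schur_expansion N (SF N n m d) c) = ?c"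
  proof (rule the_equality)
    show "schur_expansion N (SF N n m d) ?c" by (rule SF_expansion[OF assms])
    fix c assume "schur_expansion N (SF N n m d) c"
    then show "c = ?c" using expansion_unique SF_expansion[OF assms] by blast
  qed
  let ?Q = "\<lambda>p. part_first (fst p) \<le> L \<and> part_first (snd p) \<le> L"
  have sub: "{p. ?c p \<noteq> 0 \<and> ?Q p} \<subseteq> {p\<in>?PP. ?Q p}" by (auto simp: cd_def split: if_splits)
  have "truncate N L (SF N n m d) x = (\<Sum>p\<in>{p. ?c p \<noteq> 0 \<and> ?Q p}. schur_term N ?c p) x"
    by (simp add: truncate_def the Let_def)
  also have "\<dots> = (\<Sum>p\<in>{p. ?c p \<noteq> 0 \<and> ?Q p}. ?c p * tt N p x)"
    by (simp add: sum_fun_apply schur_term_apply)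
  also have "\<dots> = (\<Sum>p\<in>{p\<in>?PP. ?Q p}. ?c p * tt N p x)"
    by (rule sum.mono_neutral_left[OF _ sub]) (use finPP in auto)
  also have "\<dots> = (\<Sum>p\<in>?PP. if ?Q p then ?c p * tt N p x else 0)"
    by (rule sum.inter_filter[OF finPP])
  also have "\<dots> = (\<Sum>p\<in>?PP. if max (part_first (fst p)) (part_first (snd p)) \<le> L then int (Acnt d (fst p) (snd p)) * tt N p x else 0)"
    by (rule sum.cong) (auto simp: cd_def)
  finally show ?thesis .
qed


lemma if_int_mult: "(if Q then int a * t else 0) = int (if Q then a else 0) * (t::int)"
  by simp

lemma sum_trunc_swap:
  assumes "finite D" "\<forall>d\<in>D. d \<le> n \<and> d \<le> m" "max n m \<le> N"
  shows "(\<Sum>d\<in>D. truncate N (f d) (SF N n m d) x) =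
    (\<Sum>p\<in>partitions_of n \<times> partitions_of m.
       int (\<Sum>d\<in>D. if max (part_first (fst p)) (part_first (snd p)) \<le> f d then Acnt d (fst p) (snd p) else 0) * tt N p x)"
proof -
  let ?PP = "partitions_of n \<times> partitions_of m"
  have "(\<Sum>d\<in>D. truncate N (f d) (SF N n m d) x) =
     (\<Sum>d\<in>D. \<Sum>p\<in>?PP. if max (part_first (fst p)) (part_first (snd p)) \<le> f d then int (Acnt d (fst p) (snd p)) * tt N p x else 0)"
    by (rule sum.cong[OF refl]) (use assms(2,3) trunc_apply in blast)
  also have "\<dots> = (\<Sum>p\<in>?PP. \<Sum>d\<in>D. if max (part_first (fst p)) (part_first (snd p)) \<le> f d then int (Acnt d (fst p) (snd p)) * tt N p x else 0)"
    by (rule sum.swap)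
  also have "\<dots> = (\<Sum>p\<in>?PP. int (\<Sum>d\<in>D. if max (part_first (fst p)) (part_first (snd p)) \<le> f d then Acnt d (fst p) (snd p) else 0) * tt N p x)"
    by (simp only: if_int_mult sum_distrib_right[symmetric] of_nat_sum[symmetric])
  finally show ?thesis .
qed

lemma sum_SF_swap:
  assumes "\<forall>d\<in>D. d \<le> n \<and> d \<le> m"
  shows "(\<Sum>d\<in>D. SF N n m d x) =
    (\<Sum>p\<in>partitions_of n \<times> partitions_of m. int (\<Sum>d\<in>D. Acnt d (fst p) (snd p)) * tt N p x)"
proof -
  have "(\<Sum>d\<in>D. SF N n m d x) = (\<Sum>d\<in>D. \<Sum>p\<in>partitions_of n \<times> partitions_of m. int (Acnt d (fst p) (snd p)) * tt N p x)"
    by (rule sum.cong[OF refl]) (use assms SF_expand in blast)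
  also have "\<dots> = (\<Sum>p\<in>partitions_of n \<times> partitions_of m. \<Sum>d\<in>D. int (Acnt d (fst p) (snd p)) * tt N p x)"
    by (rule sum.swap)
  also have "\<dots> = (\<Sum>p\<in>partitions_of n \<times> partitions_of m. int (\<Sum>d\<in>D. Acnt d (fst p) (snd p)) * tt N p x)"
    by (simp only: sum_distrib_right[symmetric] of_nat_sum[symmetric])
  finally show ?thesis .
qed

theorem mainTheorem5:
  fixes n m N :: nat
  assumes "0 < n" and "0 < m" and "max n m \<le> N"
  shows "(\<Sum>d\<in>{0..min m n}. truncate N (n + m - 2 * d) (SF N n m d))
       + (\<Sum>d\<in>{0..<min m n}. truncate N (n + m - 2 * d - 1) (SF N n m d))
       = (\<Sum>r\<in>{0..min m n}. SF N n m r)"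
proof (rule ext)
  fix x
  let ?PP = "partitions_of n \<times> partitions_of m"
  let ?mn = "min m n"
  have D1: "\<forall>d\<in>{0..?mn}. d \<le> n \<and> d \<le> m" by auto
  have D2: "\<forall>d\<in>{0..<?mn}. d \<le> n \<and> d \<le> m" by auto
  have "((\<Sum>d\<in>{0..?mn}. truncate N (n + m - 2 * d) (SF N n m d))
       + (\<Sum>d\<in>{0..<?mn}. truncate N (n + m - 2 * d - 1) (SF N n m d))) x
      = (\<Sum>d\<in>{0..?mn}. truncate N (n + m - 2 * d) (SF N n m d) x)
       + (\<Sum>d\<in>{0..<?mn}. truncate N (n + m - 2 * d - 1) (SF N n m d) x)"
    by (simp add: sum_fun_apply)
  also have "\<dots> = (\<Sum>p\<in>?PP.
       int (\<Sum>d\<in>{0..?mn}. if max (part_first (fst p)) (part_first (snd p)) \<le> n + m - 2 * d then Acnt d (fst p) (snd p) else 0) * tt N p x)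
     + (\<Sum>p\<in>?PP.
       int (\<Sum>d\<in>{0..<?mn}. if max (part_first (fst p)) (part_first (snd p)) \<le> n + m - 2 * d - 1 then Acnt d (fst p) (snd p) else 0) * tt N p x)"
    using sum_trunc_swap[OF _ D1 assms(3), of "\<lambda>d. n + m - 2 * d" x]
          sum_trunc_swap[OF _ D2 assms(3), of "\<lambda>d. n + m - 2 * d - 1" x] by simp
  also have "\<dots> = (\<Sum>p\<in>?PP. int (\<Sum>d\<in>{0..?mn}. Acnt d (fst p) (snd p)) * tt N p x)"
  proof -
    have "\<dots> = (\<Sum>p\<in>?PP.
       int ((\<Sum>d\<in>{0..?mn}. if max (part_first (fst p)) (part_first (snd p)) \<le> n + m - 2 * d then Acnt d (fst p) (snd p) else 0)
          + (\<Sum>d\<in>{0..<?mn}. if max (part_first (fst p)) (part_first (snd p)) \<le> n + m - 2 * d - 1 then Acnt d (fst p) (snd p) else 0)) * tt N p x)"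
      by (simp add: sum.distrib[symmetric] distrib_right)
    also have "\<dots> = (\<Sum>p\<in>?PP. int (\<Sum>d\<in>{0..?mn}. Acnt d (fst p) (snd p)) * tt N p x)"
    proof (rule sum.cong[OF refl])
      fix p assume "p \<in> ?PP"
      then have "fst p \<in> partitions_of n" "snd p \<in> partitions_of m" by auto
      from comb_identity[OF this assms(1,2)] show
        "int ((\<Sum>d\<in>{0..?mn}. if max (part_first (fst p)) (part_first (snd p)) \<le> n + m - 2 * d then Acnt d (fst p) (snd p) else 0)
          + (\<Sum>d\<in>{0..<?mn}. if max (part_first (fst p)) (part_first (snd p)) \<le> n + m - 2 * d - 1 then Acnt d (fst p) (snd p) else 0)) * tt N p x
         = int (\<Sum>d\<in>{0..?mn}. Acnt d (fst p) (snd p)) * tt N p x" by simp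
    qed
    finally show ?thesis .
  qed
  also have "\<dots> = (\<Sum>r\<in>{0..?mn}. SF N n m r x)" using sum_SF_swap[OF D1] by simp
  also have "\<dots> = (\<Sum>r\<in>{0..?mn}. SF N n m r) x" by (simp add: sum_fun_apply)
  finally show "((\<Sum>d\<in>{0..?mn}. truncate N (n + m - 2 * d) (SF N n m d))
       + (\<Sum>d\<in>{0..<?mn}. truncate N (n + m - 2 * d - 1) (SF N n m d))) x = (\<Sum>r\<in>{0..?mn}. SF N n m r) x" .
qed


end
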